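(* Let $K=P(n_1,\dots,n_k)$ be a pretzel knot with its standard diagram $D$, with $n=|n_1|+\dots+|n_k|$ crossings numbered as described in the context, signed Tait graph $G$, and balanced overlaid Tait graph $\Gamma$ obtained by omitting the unbounded region $U$ and the upper deck $R_{\mathrm{top}}$. Then $$\sum_{\mu}\prod_{\varepsilon\in\mu}\alpha(\varepsilon)|_{Kh}=\pm\sum_{S}u^{u(S)}v^{v(S)},$$ where $\mu$ ranges over perfect matchings of $\Gamma$ and $S$ over spanning trees of $G$; i.e. the left side is, up to sign, the two-variable Poincaré polynomial of the Champanerkar–Kofman spanning tree chain complex for reduced Khovanov homology of $K$.
   Context: Pretzel diagram: for nonzero integers $n_1,\dots,n_k$, $k$ vertical twist columns placed left to right, column $i$ having $|n_i|$ crossings; adjacent columns joined at top and bottom by short arcs, and column 1 joined to column $k$ by an outer arc above and an outer arc below; the diagram is a knot. Regions: unbounded $U$; upper deck $R_{\mathrm{top}}$ (between the upper outer arc and the column tops); lower deck $R_{\mathrm{bot}}$; the $|n_i|-1$ regions inside column $i$; the regions $W_i$ between columns $i$ and $i+1$. Black regions: $R_{\mathrm{top}},R_{\mathrm{bot}}$ and the inside-column regions; white: $U,W_1,\dots,W_{k-1}$. Crossings numbered: column 1 top to bottom, then columns $2,\dots,k$ each bottom to top. Signed Tait graph $G$: vertices the black regions, one edge per crossing joining the two black regions there; positive if (viewing the crossing with the black regions above and below) the overstrand runs lower left to upper right, negative otherwise; edges ordered by crossing number. Tutte activity of edge $e$ w.r.t. spanning tree $S$: if $e\in S$, $L$ if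 $e$ is the lowest edge reconnecting $S-\{e\}$, else $D$; if $e\notin S$, $\ell$ if $e$ is the lowest edge of the unique cycle in $S\cup\{e\}$, else $d$; barred letters for negative edges. Gradings: $u(S)=\#L-\#\ell-\#\overline{L}+\#\overline{\ell}$ and $v(S)=\#L+\#D$, counting letters of the activity word of $S$. The spanning tree complex is $\mathcal{C}(D)=\bigoplus_{u,v}\mathbb{Z}\langle S : u(S)=u,\ v(S)=v\rangle$, with Poincaré polynomial $\sum_S u^{u(S)}v^{v(S)}$. $\Gamma$: bipartite plane graph with a vertex per crossing and a vertex per region other than $U,R_{\mathrm{top}}$, with an edge from crossing $c$ to region $R$ for each corner of $c$ occupied by $R$. Activity weighting $\alpha(\varepsilon)$ of the edge $\varepsilon$ from crossing $c$ to region $R$: internal ($L/D$) if $R$ black, external ($\ell/d$) if $R$ white; live ($L$ or $\ell$) if $c$ is the lowest-numbered crossing incident with $R$, dead otherwise; barred if $c$'s Tait edge is negative. Evaluations $\alpha|_{Kh}$: $L\mapsto uv$, $D\mapsto v$, $\ell\mapsto u^{-1}$, $d\mapsto 1$, $\overline{L}\mapsto u^{-1}$, $\overline{D}\mapsto 1$, $\overline{\ell}\mapsto u$, $\overline{d}\mapsto 1$. *)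

theory Defs
  imports Complex_Main
begin

definition edge_rel :: "('e \<Rightarrow> 'v \<times> 'v) \<Rightarrow> 'e set \<Rightarrow> ('v \<times> 'v) set" where
  "edge_rel ends S = {(a, b). \<exists>e\<in>S. ends e = (a, b) \<or> ends e = (b, a)}"

definition conn :: "('e \<Rightarrow> 'v \<times> 'v) \<Rightarrow> 'e set \<Rightarrow> 'v \<Rightarrow> 'v \<Rightarrow> bool" where
  "conn ends S x y \<longleftrightarrow> (x, y) \<in> (edge_rel ends S)\<^sup>*"

text \<open>S is a spanning tree of the multigraph (V, E, ends): S spans V connectedly
  and contains no cycle (every edge of S is a bridge of S).\<close>
definition spanning_tree :: "'v set \<Rightarrow> 'e set \<Rightarrow> ('e \<Rightarrow> 'v \<times> 'v) \<Rightarrow> 'e set \<Rightarrow> bool" where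
  "spanning_tree V E ends S \<longleftrightarrow>
     S \<subseteq> E \<and> (\<forall>x\<in>V. \<forall>y\<in>V. conn ends S x y) \<and>
     (\<forall>e\<in>S. \<not> conn ends (S - {e}) (fst (ends e)) (snd (ends e)))"

definition fund_cut :: "'e set \<Rightarrow> ('e \<Rightarrow> 'v \<times> 'v) \<Rightarrow> 'e set \<Rightarrow> 'e \<Rightarrow> 'e set" where
  "fund_cut E ends S e = {f\<in>E. \<not> conn ends (S - {e}) (fst (ends f)) (snd (ends f))}"

definition fund_cycle :: "('e \<Rightarrow> 'v \<times> 'v) \<Rightarrow> 'e set \<Rightarrow> 'e \<Rightarrow> 'e set" where
  "fund_cycle ends S e = {e} \<union> {f\<in>S. \<not> conn ends (S - {f}) (fst (ends e)) (snd (ends e))}"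

definition tutte_live :: "'e set \<Rightarrow> ('e \<Rightarrow> 'v \<times> 'v) \<Rightarrow> ('e \<Rightarrow> nat) \<Rightarrow> 'e set \<Rightarrow> 'e \<Rightarrow> bool" where
  "tutte_live E ends key S e \<longleftrightarrow>
     (if e \<in> S then (\<forall>f\<in>fund_cut E ends S e. key e \<le> key f)
      else (\<forall>f\<in>fund_cycle ends S e. key e \<le> key f))"

text \<open>u-grading: #L - #l - #Lbar + #lbar\<close>
definition u_grading ::
  "'e set \<Rightarrow> ('e \<Rightarrow> 'v \<times> 'v) \<Rightarrow> ('e \<Rightarrow> nat) \<Rightarrow> ('e \<Rightarrow> bool) \<Rightarrow> 'e set \<Rightarrow> int" where
  "u_grading E ends key pos S =
     int (card {e\<in>E. e \<in> S \<and> tutte_live E ends key S e \<and> pos e})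
   - int (card {e\<in>E. e \<notin> S \<and> tutte_live E ends key S e \<and> pos e})
   - int (card {e\<in>E. e \<in> S \<and> tutte_live E ends key S e \<and> \<not> pos e})
   + int (card {e\<in>E. e \<notin> S \<and> tutte_live E ends key S e \<and> \<not> pos e})"

text \<open>v-grading: #L + #D (unbarred internal letters, i.e. positive tree edges)\<close>
definition v_grading :: "'e set \<Rightarrow> ('e \<Rightarrow> bool) \<Rightarrow> 'e set \<Rightarrow> nat" where
  "v_grading E pos S = card {e\<in>E. e \<in> S \<and> pos e}"

text \<open>Columns are numbered 1..k (k = length ns), column i has |ns!(i-1)| crossings.
  A crossing is a pair (i, p): column i, p-th crossing counted from the top (1 \<le> p \<le> m i).\<close>

definition pcols :: "int list \<Rightarrow> nat" where "pcols ns = length ns"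

definition pm :: "int list \<Rightarrow> nat \<Rightarrow> nat" where "pm ns i = nat \<bar>ns ! (i - 1)\<bar>"

definition crossings :: "int list \<Rightarrow> (nat \<times> nat) set" where
  "crossings ns = {(i, p). 1 \<le> i \<and> i \<le> pcols ns \<and> 1 \<le> p \<and> p \<le> pm ns i}"

text \<open>Crossing numbering: column 1 top to bottom, then columns 2..k each bottom to top.\<close>
definition cnum :: "int list \<Rightarrow> nat \<times> nat \<Rightarrow> nat" where
  "cnum ns c = (case c of (i, p) \<Rightarrow>
     if i = 1 then p else (\<Sum>j\<in>{1..<i}. pm ns j) + (pm ns i + 1 - p))"

datatype region = U | Rtop | Rbot | Inside nat nat | W nat
  \<comment> \<open>Inside i j: j-th region from the top inside column i (1 \<le> j \<le> m i - 1);
      W i: region between columns i and i+1 (1 \<le> i \<le> k - 1)\<close>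

definition regions :: "int list \<Rightarrow> region set" where
  "regions ns = {U, Rtop, Rbot}
     \<union> {Inside i j | i j. 1 \<le> i \<and> i \<le> pcols ns \<and> 1 \<le> j \<and> j < pm ns i}
     \<union> {W i | i. 1 \<le> i \<and> i < pcols ns}"

definition black :: "region \<Rightarrow> bool" where
  "black R \<longleftrightarrow> (case R of U \<Rightarrow> False | W _ \<Rightarrow> False | _ \<Rightarrow> True)"

datatype corner = North | South | West | East

definition corner_region :: "int list \<Rightarrow> nat \<times> nat \<Rightarrow> corner \<Rightarrow> region" where
  "corner_region ns c d = (case c of (i, p) \<Rightarrow> (case d of
      North \<Rightarrow> (if p = 1 then Rtop else Inside i (p - 1))
    | South \<Rightarrow> (if p = pm ns i then Rbot else Inside i p)
    | West \<Rightarrow> (if i = 1 then U else W (i - 1))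
    | East \<Rightarrow> (if i = pcols ns then U else W i)))"

text \<open>Sign of the Tait edge of a crossing of column i: positive iff n_i > 0
  (the twist handedness convention).\<close>
definition tait_pos :: "int list \<Rightarrow> nat \<times> nat \<Rightarrow> bool" where
  "tait_pos ns c = (ns ! (fst c - 1) > 0)"

definition tait_vertices :: "int list \<Rightarrow> region set" where
  "tait_vertices ns = {R\<in>regions ns. black R}"

text \<open>Edges of G are the crossings; the edge of c joins the black regions above and below c.\<close>
definition tait_ends :: "int list \<Rightarrow> nat \<times> nat \<Rightarrow> region \<times> region" where
  "tait_ends ns c = (corner_region ns c North, corner_region ns c South)"

definition tait_spanning_trees :: "int list \<Rightarrow> (nat \<times> nat) set set" where
  "tait_spanning_trees ns = {S. spanning_tree (tait_vertices ns) (crossings ns) (tait_ends ns) S}"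

definition tree_u :: "int list \<Rightarrow> (nat \<times> nat) set \<Rightarrow> int" where
  "tree_u ns S = u_grading (crossings ns) (tait_ends ns) (cnum ns) (tait_pos ns) S"

definition tree_v :: "int list \<Rightarrow> (nat \<times> nat) set \<Rightarrow> nat" where
  "tree_v ns S = v_grading (crossings ns) (tait_pos ns) S"

definition gamma_regions :: "int list \<Rightarrow> region set" where
  "gamma_regions ns = regions ns - {U, Rtop}"

definition gamma_edges :: "int list \<Rightarrow> ((nat \<times> nat) \<times> corner) set" where
  "gamma_edges ns = {(c, d). c \<in> crossings ns \<and> corner_region ns c d \<notin> {U, Rtop}}"

definition perfect_matching :: "int list \<Rightarrow> ((nat \<times> nat) \<times> corner) set \<Rightarrow> bool" where
  "perfect_matching ns M \<longleftrightarrow> M \<subseteq> gamma_edges ns \<and>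
     (\<forall>c\<in>crossings ns. card {d. (c, d) \<in> M} = 1) \<and>
     (\<forall>R\<in>gamma_regions ns. card {\<epsilon>\<in>M. corner_region ns (fst \<epsilon>) (snd \<epsilon>) = R} = 1)"

definition gamma_live :: "int list \<Rightarrow> (nat \<times> nat) \<times> corner \<Rightarrow> bool" where
  "gamma_live ns \<epsilon> = (case \<epsilon> of (c, d) \<Rightarrow>
     (\<forall>c'\<in>crossings ns. (\<exists>d'. corner_region ns c' d' = corner_region ns c d)
         \<longrightarrow> cnum ns c \<le> cnum ns c'))"

definition alpha_kh :: "int list \<Rightarrow> real \<Rightarrow> real \<Rightarrow> (nat \<times> nat) \<times> corner \<Rightarrow> real" where
  "alpha_kh ns u v \<epsilon> = (case \<epsilon> of (c, d) \<Rightarrow>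
     (let internal = black (corner_region ns c d); live = gamma_live ns \<epsilon> in
      if tait_pos ns c then
        (if internal then (if live then u * v else v) else (if live then inverse u else 1))
      else
        (if internal then (if live then inverse u else 1) else (if live then u else 1))))"

datatype endpoint = TL nat | TR nat | BL nat | BR nat

definition endpoints :: "int list \<Rightarrow> endpoint set" where
  "endpoints ns = (\<Union>i\<in>{1..pcols ns}. {TL i, TR i, BL i, BR i})"

text \<open>Strand pieces: through each column (a twist column with m crossings connects
  top-left to bottom-left iff m is even), the short arcs between adjacent columns,
  and the two outer arcs.\<close>
definition strand_arcs :: "int list \<Rightarrow> (endpoint \<times> endpoint) set" where
  "strand_arcs ns =
     {(TL i, if even (pm ns i) then BL i else BR i) | i. 1 \<le> i \<and> i \<le> pcols ns}
   \<union> {(TR i, if even (pm ns i) then BR i else BL i) | i. 1 \<le> i \<and> i \<le> pcols ns}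
   \<union> {(TR i, TL (i + 1)) | i. 1 \<le> i \<and> i < pcols ns}
   \<union> {(BR i, BL (i + 1)) | i. 1 \<le> i \<and> i < pcols ns}
   \<union> {(TL 1, TR (pcols ns)), (BL 1, BR (pcols ns))}"

definition pretzel_is_knot :: "int list \<Rightarrow> bool" where
  "pretzel_is_knot ns \<longleftrightarrow>
     (\<forall>x\<in>endpoints ns. \<forall>y\<in>endpoints ns. (x, y) \<in> (strand_arcs ns \<union> (strand_arcs ns)\<inverse>)\<^sup>*)"

end

theory Submission
  imports Defs
begin



lemma conn_refl[simp]: "conn ends S x x"
  by (simp add: conn_def)

lemma conn_sym: "conn ends S x y \<Longrightarrow> conn ends S y x"
proof -
  have "sym (edge_rel ends S)" unfolding sym_def edge_rel_def by auto
  then show "conn ends S x y \<Longrightarrow> conn ends S y x" unfolding conn_def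
    by (metis rtrancl_converseD rtrancl_converseI sym_conv_converse_eq)
qed

lemma conn_trans: "conn ends S x y \<Longrightarrow> conn ends S y z \<Longrightarrow> conn ends S x z"
  unfolding conn_def by auto

lemma conn_edge: "e \<in> S \<Longrightarrow> ends e = (a, b) \<Longrightarrow> conn ends S a b"
  unfolding conn_def edge_rel_def by (rule r_into_rtrancl) auto

lemma conn_mono: "conn ends S x y \<Longrightarrow> S \<subseteq> S' \<Longrightarrow> conn ends S' x y"
proof -
  assume a: "conn ends S x y" "S \<subseteq> S'"
  have "edge_rel ends S \<subseteq> edge_rel ends S'" using a(2) unfolding edge_rel_def by auto
  then show ?thesis using a(1) unfolding conn_def by (meson rtrancl_mono subsetD)
qed

lemma not_conn_closed:
  assumes cl: "\<And>e. e \<in> S \<Longrightarrow> (fst (ends e) \<in> X \<longleftrightarrow> snd (ends e) \<in> X)"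
    and xy: "x \<in> X \<longleftrightarrow> y \<notin> X"
  shows "\<not> conn ends S x y"
proof
  have st: "(a, b) \<in> edge_rel ends S \<Longrightarrow> (a \<in> X \<longleftrightarrow> b \<in> X)" for a b
    unfolding edge_rel_def using cl by (auto, (metis fst_conv snd_conv)+)
  have "(a, b) \<in> (edge_rel ends S)\<^sup>* \<Longrightarrow> (a \<in> X \<longleftrightarrow> b \<in> X)" for a b
    by (induction rule: rtrancl_induct) (auto dest: st)
  moreover assume "conn ends S x y"
  ultimately show False using xy unfolding conn_def by auto
qed




locale pz =
  fixes ns :: "int list"
  assumes ne: "ns \<noteq> []" and nz: "\<forall>n\<in>set ns. n \<noteq> 0"
begin

abbreviation "k \<equiv> pcols ns"
abbreviation "m \<equiv> pm ns"

lemma k_pos: "1 \<le> k" using ne by (simp add: pcols_def Suc_leI)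

lemma m_pos: "1 \<le> i \<Longrightarrow> i \<le> k \<Longrightarrow> 1 \<le> m i"
proof -
  assume "1 \<le> i" "i \<le> k"
  then have "ns ! (i - 1) \<in> set ns" by (simp add: pcols_def)
  then have "ns ! (i - 1) \<noteq> 0" using nz by auto
  then show ?thesis by (simp add: pm_def)
qed

lemma cr_iff: "(i, p) \<in> crossings ns \<longleftrightarrow> 1 \<le> i \<and> i \<le> k \<and> 1 \<le> p \<and> p \<le> m i"
  by (simp add: crossings_def)

lemma finite_cr: "finite (crossings ns)"
proof -
  have "crossings ns = Sigma {1..k} (\<lambda>i. {1..m i})"
    by (auto simp: crossings_def)
  then show ?thesis by simp
qed

definition vtx :: "nat \<Rightarrow> nat \<Rightarrow> region" where
  "vtx i q = (if q = 0 then Rtop else if q = m i then Rbot else Inside i q)"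

lemma ends_vtx: "(i, p) \<in> crossings ns \<Longrightarrow> tait_ends ns (i, p) = (vtx i (p - 1), vtx i p)"
  by (auto simp: tait_ends_def corner_region_def vtx_def cr_iff)

lemma ends_vtx': "1 \<le> p \<Longrightarrow> p \<le> m i \<Longrightarrow> tait_ends ns (i, p) = (vtx i (p - 1), vtx i p)"
  by (auto simp: tait_ends_def corner_region_def vtx_def)

lemma col_path:
  assumes "\<And>r. a < r \<Longrightarrow> r \<le> b \<Longrightarrow> (i, r) \<in> S" "a \<le> b" "b \<le> m i"
  shows "conn (tait_ends ns) S (vtx i a) (vtx i b)"
  using assms
proof (induction b)
  case 0 then show ?case by simp
next
  case (Suc b)
  show ?case
  proof (cases "a = Suc b")
    case True then show ?thesis by simp
  next
    case False
    then have "conn (tait_ends ns) S (vtx i a) (vtx i b)" using Suc by auto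
    moreover have "conn (tait_ends ns) S (vtx i b) (vtx i (Suc b))"
      by (rule conn_edge[of "(i, Suc b)"]) (use Suc False in \<open>auto simp: ends_vtx'\<close>)
    ultimately show ?thesis by (rule conn_trans)
  qed
qed

definition Xtop :: "(nat \<Rightarrow> nat) \<Rightarrow> region set" where
  "Xtop H = {Rtop} \<union> {Inside i q | i q. 1 \<le> i \<and> i \<le> k \<and> 1 \<le> q \<and> q < H i}"

lemma vtx_Xtop:
  assumes "\<And>i. 1 \<le> i \<Longrightarrow> i \<le> k \<Longrightarrow> H i \<le> m i \<and> 1 \<le> H i" "1 \<le> i" "i \<le> k" "q \<le> m i"
  shows "vtx i q \<in> Xtop H \<longleftrightarrow> q < H i"
  using assms(1)[OF assms(2,3)] assms(2-4) by (auto simp: vtx_def Xtop_def)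

lemma straddle_Xtop:
  assumes "\<And>i. 1 \<le> i \<Longrightarrow> i \<le> k \<Longrightarrow> H i \<le> m i \<and> 1 \<le> H i" "(i, r) \<in> crossings ns"
  shows "(fst (tait_ends ns (i, r)) \<in> Xtop H \<longleftrightarrow> snd (tait_ends ns (i, r)) \<in> Xtop H)
     \<longleftrightarrow> r \<noteq> H i"
proof -
  have r: "1 \<le> i" "i \<le> k" "1 \<le> r" "r \<le> m i" using assms(2) by (auto simp: cr_iff)
  show ?thesis using r
    by (simp add: ends_vtx[OF assms(2)] vtx_Xtop[OF assms(1)]) linarith
qed

definition Xseg :: "nat \<Rightarrow> nat \<Rightarrow> nat \<Rightarrow> region set" where
  "Xseg i a b = {Inside i q | q. a \<le> q \<and> q < b}"

lemma vtx_Xseg: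
  assumes "1 \<le> a" "b \<le> m i'" "q \<le> m i"
  shows "vtx i q \<in> Xseg i' a b \<longleftrightarrow> i = i' \<and> a \<le> q \<and> q < b"
  using assms by (auto simp: vtx_def Xseg_def)

lemma straddle_Xseg:
  assumes "1 \<le> a" "b \<le> m i'" "(i, r) \<in> crossings ns"
  shows "(fst (tait_ends ns (i, r)) \<in> Xseg i' a b \<longleftrightarrow> snd (tait_ends ns (i, r)) \<in> Xseg i' a b)
     \<longleftrightarrow> \<not> (i = i' \<and> a < b \<and> (r = a \<or> r = b))"
proof -
  have r: "1 \<le> r" "r \<le> m i" using assms(3) by (auto simp: cr_iff)
  show ?thesis using r assms(1,2)
    by (simp add: ends_vtx[OF assms(3)] vtx_Xseg) linarith
qed

end



context pz begin

definition valid :: "nat \<Rightarrow> (nat \<Rightarrow> nat) \<Rightarrow> bool" where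
  "valid j P \<longleftrightarrow> 1 \<le> j \<and> j \<le> k \<and> (\<forall>i. 1 \<le> i \<and> i \<le> k \<longrightarrow> 1 \<le> P i \<and> P i \<le> m i)
     \<and> P j = m j \<and> (\<forall>i. \<not> (1 \<le> i \<and> i \<le> k) \<longrightarrow> P i = 0)"

definition tree :: "nat \<Rightarrow> (nat \<Rightarrow> nat) \<Rightarrow> (nat \<times> nat) set" where
  "tree j P = {c \<in> crossings ns. fst c = j \<or> snd c \<noteq> P (fst c)}"

definition cutset :: "nat \<Rightarrow> (nat \<Rightarrow> nat) \<Rightarrow> nat \<times> nat \<Rightarrow> (nat \<times> nat) set" where
  "cutset j P f = (if fst f = j then insert f {(i, P i) | i. 1 \<le> i \<and> i \<le> k \<and> i \<noteq> j}
      else {f, (fst f, P (fst f))})"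

lemma vtx_m: "1 \<le> i \<Longrightarrow> i \<le> k \<Longrightarrow> vtx i (m i) = Rbot"
  using m_pos[of i] by (auto simp: vtx_def)

lemma vtx_0: "vtx i 0 = Rtop" by (simp add: vtx_def)

lemma conn_Rtop:
  assumes "\<And>r. 1 \<le> r \<Longrightarrow> r \<le> m j \<Longrightarrow> (j, r) \<in> S" "1 \<le> j" "j \<le> k"
    "\<And>r. 1 \<le> r \<Longrightarrow> r \<le> m i \<Longrightarrow> r \<noteq> p0 \<Longrightarrow> (i, r) \<in> S" "q \<le> m i" "1 \<le> i" "i \<le> k"
  shows "conn (tait_ends ns) S (vtx i q) Rtop"
proof -
  have tb: "conn (tait_ends ns) S Rtop Rbot"
    using col_path[of 0 "m j" j S] assms(1-3) vtx_m vtx_0 by auto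
  show ?thesis
  proof (cases "q < p0")
    case True
    have "conn (tait_ends ns) S (vtx i 0) (vtx i q)"
      by (rule col_path) (use assms True in auto)
    then show ?thesis by (simp add: vtx_0 conn_sym)
  next
    case False
    have "conn (tait_ends ns) S (vtx i q) (vtx i (m i))"
      by (rule col_path) (use assms False in auto)
    then have "conn (tait_ends ns) S (vtx i q) Rbot" using vtx_m assms by simp
    then show ?thesis using tb conn_sym conn_trans by metis
  qed
qed

lemma validD: assumes "valid j P"
  shows "1 \<le> j" "j \<le> k" "\<And>i. 1 \<le> i \<Longrightarrow> i \<le> k \<Longrightarrow> 1 \<le> P i \<and> P i \<le> m i" "P j = m j"
  using assms by (auto simp: valid_def)

lemma not_conn_straddle:
  assumes "\<And>e. e \<in> S \<Longrightarrow> (fst (ends e) \<in> X \<longleftrightarrow> snd (ends e) \<in> X)"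
    and "\<not> (fst (ends g) \<in> X \<longleftrightarrow> snd (ends g) \<in> X)"
  shows "\<not> conn ends S (fst (ends g)) (snd (ends g))"
  by (rule not_conn_closed[OF assms(1)]) (use assms(2) in auto)

lemma cut:
  assumes v: "valid j P" and f: "f \<in> tree j P" and g: "g \<in> crossings ns"
  shows "(\<not> conn (tait_ends ns) (tree j P - {f}) (fst (tait_ends ns g)) (snd (tait_ends ns g)))
    \<longleftrightarrow> g \<in> cutset j P f"
proof -
  note vd = validD[OF v]
  obtain i p where fi: "f = (i, p)" by fastforce
  obtain i' r where gi: "g = (i', r)" by fastforce
  have fc: "(i, p) \<in> crossings ns" using f fi by (simp add: tree_def)
  show ?thesis
  proof (cases "i = j")
    case True
    define H where "H = P(j := p)"
    have H: "\<And>a. 1 \<le> a \<Longrightarrow> a \<le> k \<Longrightarrow> H a \<le> m a \<and> 1 \<le> H a"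
      using vd fc True by (auto simp: H_def cr_iff)
    have cl: "fst (tait_ends ns e) \<in> Xtop H \<longleftrightarrow> snd (tait_ends ns e) \<in> Xtop H"
      if "e \<in> tree j P - {f}" for e
    proof -
      obtain a b where e: "e = (a, b)" by fastforce
      have ec: "(a, b) \<in> crossings ns" using that e by (simp add: tree_def)
      have "b \<noteq> H a" using that e True fi by (auto simp: tree_def H_def)
      then show ?thesis using straddle_Xtop[OF H ec] e by simp
    qed
    show ?thesis
    proof
      assume nc: "\<not> conn (tait_ends ns) (tree j P - {f}) (fst (tait_ends ns g)) (snd (tait_ends ns g))"
      show "g \<in> cutset j P f"
      proof (rule ccontr)
        assume ng: "g \<notin> cutset j P f"
        then have "g \<noteq> f" using fi by (auto simp: cutset_def split: if_splits)
        moreover have "g \<in> tree j P" using ng g gi True fi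
          by (auto simp: tree_def cutset_def cr_iff)
        ultimately have "conn (tait_ends ns) (tree j P - {f}) (fst (tait_ends ns g)) (snd (tait_ends ns g))"
          by (intro conn_edge[of g]) auto
        then show False using nc by simp
      qed
    next
      assume gc: "g \<in> cutset j P f"
      have "r = H i'" using gc gi fi True g by (auto simp: cutset_def H_def cr_iff)
      then have "\<not> (fst (tait_ends ns g) \<in> Xtop H \<longleftrightarrow> snd (tait_ends ns g) \<in> Xtop H)"
        using straddle_Xtop[OF H, of i' r] g gi by simp
      then show "\<not> conn (tait_ends ns) (tree j P - {f}) (fst (tait_ends ns g)) (snd (tait_ends ns g))"
        by (rule not_conn_straddle[rotated]) (rule cl)
    qed
  next
    case False
    have pP: "p \<noteq> P i" using f fi False by (simp add: tree_def)
    define a where "a = min p (P i)"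
    define b where "b = max p (P i)"
    have ab: "1 \<le> a" "b \<le> m i" "a < b" using vd(3)[of i] fc pP by (auto simp: a_def b_def cr_iff)
    have cl: "fst (tait_ends ns e) \<in> Xseg i a b \<longleftrightarrow> snd (tait_ends ns e) \<in> Xseg i a b"
      if "e \<in> tree j P - {f}" for e
    proof -
      obtain a' b' where e: "e = (a', b')" by fastforce
      have ec: "(a', b') \<in> crossings ns" using that e by (simp add: tree_def)
      have "\<not> (a' = i \<and> a < b \<and> (b' = a \<or> b' = b))" using that e False fi
        by (auto simp: tree_def a_def b_def min_def max_def split: if_splits)
      then show ?thesis using straddle_Xseg[OF ab(1,2) ec] e by simp
    qed
    show ?thesis
    proof
      assume nc: "\<not> conn (tait_ends ns) (tree j P - {f}) (fst (tait_ends ns g)) (snd (tait_ends ns g))"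
      show "g \<in> cutset j P f"
      proof (rule ccontr)
        assume ng: "g \<notin> cutset j P f"
        have "conn (tait_ends ns) (tree j P - {f}) (fst (tait_ends ns g)) (snd (tait_ends ns g))"
        proof (cases "g \<in> tree j P")
          case True
          then have "g \<noteq> f" using ng fi by (auto simp: cutset_def split: if_splits)
          then show ?thesis using True by (intro conn_edge[of g]) auto
        next
          case gT: False
          have g': "i' \<noteq> j" "r = P i'" "i' \<noteq> i" "1 \<le> i'" "i' \<le> k" "1 \<le> r" "r \<le> m i'"
            using gT g gi ng fi False by (auto simp: tree_def cutset_def cr_iff)
          have c1: "conn (tait_ends ns) (tree j P - {f}) (vtx i' q) Rtop" if "q \<le> m i'" for q
            by (rule conn_Rtop[of j _ i' "P i'"])
              (use vd fi False g' that in \<open>auto simp: tree_def cr_iff\<close>)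
          have "conn (tait_ends ns) (tree j P - {f}) (vtx i' (r - 1)) (vtx i' r)"
            using c1[of "r - 1"] c1[of r] g'(7) by (meson conn_sym conn_trans diff_le_self le_trans)
          then show ?thesis using ends_vtx[OF g[unfolded gi]] gi by simp
        qed
        then show False using nc by simp
      qed
    next
      assume gc: "g \<in> cutset j P f"
      have "i' = i \<and> (r = a \<or> r = b)" using gc gi fi False by (auto simp: cutset_def a_def b_def)
      then have "\<not> (fst (tait_ends ns g) \<in> Xseg i a b \<longleftrightarrow> snd (tait_ends ns g) \<in> Xseg i a b)"
        using straddle_Xseg[OF ab(1,2), of i' r] g gi ab(3) by simp
      then show "\<not> conn (tait_ends ns) (tree j P - {f}) (fst (tait_ends ns g)) (snd (tait_ends ns g))"
        by (rule not_conn_straddle[rotated]) (rule cl)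
    qed
  qed
qed

end



context pz begin

lemma V_vtx: "x \<in> tait_vertices ns \<Longrightarrow> \<exists>i q. 1 \<le> i \<and> i \<le> k \<and> q \<le> m i \<and> x = vtx i q"
proof -
  assume x: "x \<in> tait_vertices ns"
  have k1: "1 \<le> k" by (rule k_pos)
  show ?thesis
  proof (cases x)
    case Rtop then show ?thesis using k1 by (intro exI[of _ 1] exI[of _ 0]) (simp add: vtx_0)
  next
    case Rbot then show ?thesis using k1 vtx_m[of 1] by (intro exI[of _ 1] exI[of _ "m 1"]) simp
  next
    case (Inside i q) then show ?thesis using x
      by (intro exI[of _ i] exI[of _ q]) (auto simp: tait_vertices_def regions_def vtx_def)
  qed (use x in \<open>auto simp: tait_vertices_def black_def\<close>)
qed

lemma Rtop_V: "Rtop \<in> tait_vertices ns" by (simp add: tait_vertices_def regions_def black_def)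
lemma Rbot_V: "Rbot \<in> tait_vertices ns" by (simp add: tait_vertices_def regions_def black_def)
lemma Inside_V: "1 \<le> i \<Longrightarrow> i \<le> k \<Longrightarrow> 1 \<le> q \<Longrightarrow> q < m i \<Longrightarrow> Inside i q \<in> tait_vertices ns"
  by (simp add: tait_vertices_def regions_def black_def)

lemma tree_spanning:
  assumes v: "valid j P"
  shows "tree j P \<in> tait_spanning_trees ns"
proof -
  note vd = validD[OF v]
  have c: "conn (tait_ends ns) (tree j P) x Rtop" if x: "x \<in> tait_vertices ns" for x
  proof -
    obtain i q where iq: "1 \<le> i" "i \<le> k" "q \<le> m i" "x = vtx i q" using V_vtx[OF x] by blast
    show ?thesis unfolding iq(4)
      by (rule conn_Rtop[of j _ i "P i"]) (use vd iq in \<open>auto simp: tree_def cr_iff\<close>)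
  qed
  have b: "\<not> conn (tait_ends ns) (tree j P - {e}) (fst (tait_ends ns e)) (snd (tait_ends ns e))"
    if "e \<in> tree j P" for e
    using cut[OF v that, of e] that by (auto simp: tree_def cutset_def)
  show ?thesis unfolding tait_spanning_trees_def spanning_tree_def
  proof (intro CollectI conjI ballI)
    show "tree j P \<subseteq> crossings ns" by (auto simp: tree_def)
  next
    fix x y assume "x \<in> tait_vertices ns" "y \<in> tait_vertices ns"
    then show "conn (tait_ends ns) (tree j P) x y" using c conn_sym conn_trans by metis
  next
    fix e assume "e \<in> tree j P"
    then show "\<not> conn (tait_ends ns) (tree j P - {e}) (fst (tait_ends ns e)) (snd (tait_ends ns e))"
      by (rule b)
  qed
qed

lemma tree_inj:
  assumes v: "valid j P" and v': "valid j' P'" and eq: "tree j P = tree j' P'"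
  shows "j = j' \<and> P = P'"
proof -
  note vd = validD[OF v] and vd' = validD[OF v']
  have jj: "j = j'"
  proof (rule ccontr)
    assume ne: "j \<noteq> j'"
    have "(j', P j') \<in> crossings ns" using vd vd' by (auto simp: cr_iff)
    then have "(j', P j') \<in> tree j' P'" by (simp add: tree_def)
    moreover have "(j', P j') \<notin> tree j P" using ne by (simp add: tree_def)
    ultimately show False using eq by simp
  qed
  have "P i = P' i" for i
  proof (cases "1 \<le> i \<and> i \<le> k")
    case True
    show ?thesis
    proof (cases "i = j")
      case True then show ?thesis using vd vd' jj by simp
    next
      case False
      have "(i, P i) \<in> crossings ns" using vd \<open>1 \<le> i \<and> i \<le> k\<close> by (auto simp: cr_iff)
      moreover have "(i, P i) \<notin> tree j P" using False by (simp add: tree_def)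
      moreover have "(i, P i) \<notin> tree j' P'" using eq calculation(2) by simp
      ultimately show ?thesis using jj False by (simp add: tree_def)
    qed
  next
    case False then show ?thesis using v v' by (simp add: valid_def)
  qed
  then show ?thesis using jj by auto
qed

lemma tree_surj:
  assumes S: "S \<in> tait_spanning_trees ns"
  shows "\<exists>j P. valid j P \<and> S = tree j P"
proof -
  have sub: "S \<subseteq> crossings ns"
    and con: "\<And>x y. x \<in> tait_vertices ns \<Longrightarrow> y \<in> tait_vertices ns \<Longrightarrow> conn (tait_ends ns) S x y"
    and br: "\<And>e. e \<in> S \<Longrightarrow> \<not> conn (tait_ends ns) (S - {e}) (fst (tait_ends ns e)) (snd (tait_ends ns e))"
    using S by (auto simp: tait_spanning_trees_def spanning_tree_def)
  have one: "r1 = r2" if "1 \<le> i" "i \<le> k" "1 \<le> r1" "r1 \<le> m i" "1 \<le> r2" "r2 \<le> m i"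
      "(i, r1) \<notin> S" "(i, r2) \<notin> S" for i r1 r2
  proof (rule ccontr)
    assume ne: "r1 \<noteq> r2"
    have "\<exists>a b. 1 \<le> a \<and> a < b \<and> b \<le> m i \<and> (i, a) \<notin> S \<and> (i, b) \<notin> S"
    proof (cases "r1 < r2")
      case True then show ?thesis using that by blast
    next
      case False then have "r2 < r1" using ne by simp
      then show ?thesis using that by blast
    qed
    then obtain a b where ab: "1 \<le> a" "a < b" "b \<le> m i" "(i, a) \<notin> S" "(i, b) \<notin> S"
      by blast
    have cl: "fst (tait_ends ns e) \<in> Xseg i a b \<longleftrightarrow> snd (tait_ends ns e) \<in> Xseg i a b" if "e \<in> S" for e
    proof -
      obtain a' b' where e: "e = (a', b')" by fastforce
      have ec: "(a', b') \<in> crossings ns" using that e sub by auto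
      have "\<not> (a' = i \<and> a < b \<and> (b' = a \<or> b' = b))" using that e ab by auto
      then show ?thesis using straddle_Xseg[OF ab(1,3) ec] e by simp
    qed
    have "\<not> conn (tait_ends ns) S (Inside i a) Rtop"
      by (rule not_conn_closed[OF cl]) (use ab in \<open>auto simp: Xseg_def\<close>)
    moreover have "Inside i a \<in> tait_vertices ns" using Inside_V ab that by auto
    ultimately show False using con Rtop_V by blast
  qed
  have full: "\<exists>j. 1 \<le> j \<and> j \<le> k \<and> (\<forall>r. 1 \<le> r \<and> r \<le> m j \<longrightarrow> (j, r) \<in> S)"
  proof (rule ccontr)
    assume "\<not> ?thesis"
    then have "\<forall>i. \<exists>r. 1 \<le> i \<and> i \<le> k \<longrightarrow> 1 \<le> r \<and> r \<le> m i \<and> (i, r) \<notin> S" by blast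
    then obtain H where H: "\<And>i. 1 \<le> i \<Longrightarrow> i \<le> k \<Longrightarrow> 1 \<le> H i \<and> H i \<le> m i \<and> (i, H i) \<notin> S"
      by metis
    have H': "\<And>i. 1 \<le> i \<Longrightarrow> i \<le> k \<Longrightarrow> H i \<le> m i \<and> 1 \<le> H i" using H by blast
    have cl: "fst (tait_ends ns e) \<in> Xtop H \<longleftrightarrow> snd (tait_ends ns e) \<in> Xtop H" if "e \<in> S" for e
    proof -
      obtain a b where e: "e = (a, b)" by fastforce
      have ec: "(a, b) \<in> crossings ns" using that e sub by auto
      have "b \<noteq> H a" using H[of a] ec that e by (auto simp: cr_iff)
      then show ?thesis using straddle_Xtop[OF H' ec] e by simp
    qed
    have "\<not> conn (tait_ends ns) S Rtop Rbot"
      by (rule not_conn_closed[OF cl]) (auto simp: Xtop_def)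
    then show False using con Rtop_V Rbot_V by blast
  qed
  then obtain j where j: "1 \<le> j" "j \<le> k" "\<And>r. 1 \<le> r \<Longrightarrow> r \<le> m j \<Longrightarrow> (j, r) \<in> S" by blast
  have notfull: "\<exists>r. 1 \<le> r \<and> r \<le> m i \<and> (i, r) \<notin> S" if "1 \<le> i" "i \<le> k" "i \<noteq> j" for i
  proof (rule ccontr)
    assume "\<not> ?thesis"
    then have fi: "\<And>r. 1 \<le> r \<Longrightarrow> r \<le> m i \<Longrightarrow> (i, r) \<in> S" by blast
    have m1: "1 \<le> m j" using m_pos j by auto
    have e: "(j, 1) \<in> S" using j m1 by auto
    have "conn (tait_ends ns) (S - {(j, 1)}) (vtx i 0) (vtx i (m i))"
      by (rule col_path) (use fi that in auto)
    then have a1: "conn (tait_ends ns) (S - {(j, 1)}) Rtop Rbot" using vtx_0 vtx_m that by simp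
    have "conn (tait_ends ns) (S - {(j, 1)}) (vtx j 1) (vtx j (m j))"
      by (rule col_path) (use j m1 in auto)
    then have a2: "conn (tait_ends ns) (S - {(j, 1)}) (vtx j 1) Rbot" using vtx_m j by simp
    have "conn (tait_ends ns) (S - {(j, 1)}) (vtx j 0) (vtx j 1)"
      using a1 a2 vtx_0 by (metis conn_sym conn_trans)
    moreover have "tait_ends ns (j, 1) = (vtx j 0, vtx j 1)" using ends_vtx'[of 1 j] m1 by simp
    ultimately show False using br[OF e] by simp
  qed
  define P where "P i = (if i = j then m j else if 1 \<le> i \<and> i \<le> k
      then (SOME r. 1 \<le> r \<and> r \<le> m i \<and> (i, r) \<notin> S) else 0)" for i
  have Pi: "1 \<le> P i \<and> P i \<le> m i \<and> (i, P i) \<notin> S" if "1 \<le> i" "i \<le> k" "i \<noteq> j" for i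
    using someI_ex[OF notfull[OF that]] that by (simp add: P_def)
  have v1: "1 \<le> P i \<and> P i \<le> m i" if "1 \<le> i \<and> i \<le> k" for i
    using that Pi[of i] m_pos[of i] by (cases "i = j") (auto simp: P_def)
  have v: "valid j P" unfolding valid_def
    using v1 j by (auto simp: P_def)
  have "S = tree j P"
  proof
    show "S \<subseteq> tree j P"
    proof
      fix c assume c: "c \<in> S"
      obtain i p where ip: "c = (i, p)" by fastforce
      have "(i, p) \<in> crossings ns" using c ip sub by auto
      moreover have "i = j \<or> p \<noteq> P i" using Pi[of i] c ip calculation by (auto simp: cr_iff)
      ultimately show "c \<in> tree j P" using ip by (simp add: tree_def)
    qed
  next
    show "tree j P \<subseteq> S"
    proof
      fix c assume c: "c \<in> tree j P"
      obtain i p where ip: "c = (i, p)" by fastforce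
      have cr: "1 \<le> i" "i \<le> k" "1 \<le> p" "p \<le> m i" using c ip by (auto simp: tree_def cr_iff)
      show "c \<in> S"
      proof (cases "i = j")
        case True then show ?thesis using j cr ip by auto
      next
        case False
        then have "p \<noteq> P i" using c ip by (simp add: tree_def)
        then show ?thesis using one[of i p "P i"] Pi[OF cr(1,2) False] cr ip by auto
      qed
    qed
  qed
  then show ?thesis using v by blast
qed

end



context pz begin

definition dir :: "nat \<Rightarrow> (nat \<Rightarrow> nat) \<Rightarrow> nat \<times> nat \<Rightarrow> corner" where
  "dir j P c = (case c of (i, p) \<Rightarrow> if p < P i then South else if P i < p then North
     else if i = j then South else if i < j then East else West)"

definition match :: "nat \<Rightarrow> (nat \<Rightarrow> nat) \<Rightarrow> ((nat \<times> nat) \<times> corner) set" where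
  "match j P = (\<lambda>c. (c, dir j P c)) ` crossings ns"

lemma corner_Inside:
  assumes "(i', p') \<in> crossings ns" "corner_region ns (i', p') x = Inside i p"
  shows "((i', p') = (i, p) \<and> x = South) \<or> ((i', p') = (i, Suc p) \<and> x = North)"
  using assms by (cases x) (auto simp: corner_region_def cr_iff split: if_splits)

lemma corner_Rbot:
  assumes "(i', p') \<in> crossings ns"
  shows "corner_region ns (i', p') x = Rbot \<longleftrightarrow> x = South \<and> p' = m i'"
  using assms by (cases x) (auto simp: corner_region_def cr_iff split: if_splits)

lemma corner_W:
  assumes "(i', p') \<in> crossings ns" "1 \<le> i"
  shows "corner_region ns (i', p') x = W i \<longleftrightarrow> (i' = i \<and> i \<noteq> k \<and> x = East) \<or> (i' = Suc i \<and> x = West)"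
  using assms by (cases x) (auto simp: corner_region_def cr_iff split: if_splits)

lemma dir_S: "dir j P (i, p) = South \<longleftrightarrow> p < P i \<or> (p = P i \<and> i = j)"
  by (simp add: dir_def)
lemma dir_N: "dir j P (i, p) = North \<longleftrightarrow> P i < p"
  by (simp add: dir_def)
lemma dir_E: "dir j P (i, p) = East \<longleftrightarrow> p = P i \<and> i \<noteq> j \<and> i < j"
  by (simp add: dir_def)
lemma dir_W: "dir j P (i, p) = West \<longleftrightarrow> p = P i \<and> i \<noteq> j \<and> \<not> i < j"
  by (simp add: dir_def)

lemma card_graph_filter:
  "card {\<epsilon> \<in> (\<lambda>c. (c, f c)) ` A. Q (fst \<epsilon>) (snd \<epsilon>)} = card {c \<in> A. Q c (f c)}"
proof -
  have "{\<epsilon> \<in> (\<lambda>c. (c, f c)) ` A. Q (fst \<epsilon>) (snd \<epsilon>)} = (\<lambda>c. (c, f c)) ` {c \<in> A. Q c (f c)}"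
    by auto
  moreover have "inj_on (\<lambda>c. (c, f c)) {c \<in> A. Q c (f c)}" by (auto simp: inj_on_def)
  ultimately show ?thesis by (simp add: card_image)
qed

lemma gamma_regions_cases:
  "R \<in> gamma_regions ns \<longleftrightarrow> R = Rbot \<or> (\<exists>i q. R = Inside i q \<and> 1 \<le> i \<and> i \<le> k \<and> 1 \<le> q \<and> q < m i)
     \<or> (\<exists>i. R = W i \<and> 1 \<le> i \<and> i < k)"
  by (auto simp: gamma_regions_def regions_def)

lemma match_pm:
  assumes v: "valid j P"
  shows "perfect_matching ns (match j P)"
proof -
  note vd = validD[OF v]
  have P0: "\<And>i. 1 \<le> i \<Longrightarrow> i \<le> k \<Longrightarrow> 1 \<le> P i \<and> P i \<le> m i" using vd by blast
  have ge: "corner_region ns c (dir j P c) \<notin> {U, Rtop}" if c0: "c \<in> crossings ns" for c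
  proof -
    obtain i p where c: "c = (i, p)" by fastforce
    have cr: "1 \<le> i" "i \<le> k" "1 \<le> p" "p \<le> m i" using c0 c by (auto simp: cr_iff)
    have Pi: "1 \<le> P i" "P i \<le> m i" using cr P0 by auto
    show ?thesis unfolding c
    proof (cases "dir j P (i, p)")
      case North then have "P i < p" by (simp add: dir_N)
      then show "corner_region ns (i, p) (dir j P (i, p)) \<notin> {U, Rtop}"
        using North Pi by (simp add: corner_region_def)
    next
      case South then show "corner_region ns (i, p) (dir j P (i, p)) \<notin> {U, Rtop}"
        by (simp add: corner_region_def)
    next
      case East then have "i < j" by (simp add: dir_E)
      then show "corner_region ns (i, p) (dir j P (i, p)) \<notin> {U, Rtop}"
        using East vd(2) by (simp add: corner_region_def)
    next
      case West then have "j < i" by (auto simp: dir_W)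
      then show "corner_region ns (i, p) (dir j P (i, p)) \<notin> {U, Rtop}"
        using West vd(1) by (simp add: corner_region_def)
    qed
  qed
  have reg: "\<exists>c0. {c \<in> crossings ns. corner_region ns c (dir j P c) = R} = {c0}"
    if R: "R \<in> gamma_regions ns" for R
  proof -
    consider "R = Rbot" | i q where "R = Inside i q" "1 \<le> i" "i \<le> k" "1 \<le> q" "q < m i"
      | i where "R = W i" "1 \<le> i" "i < k"
      using R gamma_regions_cases by blast
    then show ?thesis
    proof cases
      case 1
      have "{c \<in> crossings ns. corner_region ns c (dir j P c) = R} = {(j, m j)}"
      proof (intro equalityI subsetI)
        fix c assume c: "c \<in> {c \<in> crossings ns. corner_region ns c (dir j P c) = R}"
        obtain i p where ip: "c = (i, p)" by fastforce
        have cr: "(i, p) \<in> crossings ns" "corner_region ns (i, p) (dir j P (i, p)) = Rbot"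
          using c ip 1 by auto
        have "dir j P (i, p) = South" "p = m i" using corner_Rbot[OF cr(1)] cr(2) by auto
        moreover have "P i \<le> m i" using P0[of i] cr(1) by (auto simp: cr_iff)
        ultimately show "c \<in> {(j, m j)}" using ip by (auto simp: dir_S)
      next
        fix c assume "c \<in> {(j, m j)}"
        moreover have "(j, m j) \<in> crossings ns" using vd m_pos by (auto simp: cr_iff)
        ultimately show "c \<in> {c \<in> crossings ns. corner_region ns c (dir j P c) = R}"
          using 1 vd corner_Rbot by (auto simp: dir_S)
      qed
      then show ?thesis by blast
    next
      case 2
      have Pi: "1 \<le> P i" "P i \<le> m i" using P0 2 by auto
      have "{c \<in> crossings ns. corner_region ns c (dir j P c) = R} =
          {if q < P i then (i, q) else (i, Suc q)}"
      proof (intro equalityI subsetI)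
        fix c assume c: "c \<in> {c \<in> crossings ns. corner_region ns c (dir j P c) = R}"
        obtain i' p where ip: "c = (i', p)" by fastforce
        have cr: "(i', p) \<in> crossings ns" "corner_region ns (i', p) (dir j P (i', p)) = Inside i q"
          using c ip 2 by auto
        from corner_Inside[OF cr] consider "(i', p) = (i, q)" "dir j P (i', p) = South"
          | "(i', p) = (i, Suc q)" "dir j P (i', p) = North" by blast
        then show "c \<in> {if q < P i then (i, q) else (i, Suc q)}"
        proof cases
          case 1
          then have "q < P i \<or> (q = P i \<and> i = j)" by (simp add: dir_S)
          then have "q < P i" using vd(4) 2(5) by auto
          then show ?thesis using 1 ip by simp
        next
          case 2
          then have "P i < Suc q" by (simp add: dir_N)
          then show ?thesis using 2 ip by simp
        qed
      next
        fix c assume c: "c \<in> {if q < P i then (i, q) else (i, Suc q)}"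
        show "c \<in> {c \<in> crossings ns. corner_region ns c (dir j P c) = R}"
        proof (cases "q < P i")
          case True
          then have d: "dir j P (i, q) = South" by (simp add: dir_S)
          have "c = (i, q)" using c True by simp
          moreover have "(i, q) \<in> crossings ns" using 2 by (simp add: cr_iff)
          moreover have "corner_region ns (i, q) South = Inside i q" using 2 by (simp add: corner_region_def)
          ultimately show ?thesis using d 2(1) by simp
        next
          case False
          then have d: "dir j P (i, Suc q) = North" by (simp add: dir_N)
          have "c = (i, Suc q)" using c False by simp
          moreover have "(i, Suc q) \<in> crossings ns" using 2 by (simp add: cr_iff)
          moreover have "corner_region ns (i, Suc q) North = Inside i q" using 2 by (simp add: corner_region_def)
          ultimately show ?thesis using d 2(1) by simp
        qed
      qed
      then show ?thesis by blast
    next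
      case 3
      have Pi: "1 \<le> P i" "P i \<le> m i" "1 \<le> P (Suc i)" "P (Suc i) \<le> m (Suc i)"
        using P0[of i] P0[of "Suc i"] 3 by auto
      have "{c \<in> crossings ns. corner_region ns c (dir j P c) = R} =
          {if i < j then (i, P i) else (Suc i, P (Suc i))}"
      proof (intro equalityI subsetI)
        fix c assume c: "c \<in> {c \<in> crossings ns. corner_region ns c (dir j P c) = R}"
        obtain i' p where ip: "c = (i', p)" by fastforce
        have cr: "(i', p) \<in> crossings ns" "corner_region ns (i', p) (dir j P (i', p)) = W i"
          using c ip 3 by auto
        from corner_W[OF cr(1) 3(2)] cr(2) consider "i' = i" "dir j P (i', p) = East"
          | "i' = Suc i" "dir j P (i', p) = West" by blast
        then show "c \<in> {if i < j then (i, P i) else (Suc i, P (Suc i))}"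
        proof cases
          case 1
          then have "p = P i" "i < j" by (simp_all add: dir_E)
          then show ?thesis using 1 ip by simp
        next
          case 2
          then have "p = P (Suc i)" "\<not> i < j" by (simp_all add: dir_W)
          then show ?thesis using 2 ip by simp
        qed
      next
        fix c assume c: "c \<in> {if i < j then (i, P i) else (Suc i, P (Suc i))}"
        show "c \<in> {c \<in> crossings ns. corner_region ns c (dir j P c) = R}"
        proof (cases "i < j")
          case True
          then have d: "dir j P (i, P i) = East" by (simp add: dir_E)
          have "c = (i, P i)" using c True by simp
          moreover have "(i, P i) \<in> crossings ns" using 3 Pi by (simp add: cr_iff)
          moreover have "corner_region ns (i, P i) East = W i" using 3 by (simp add: corner_region_def)
          ultimately show ?thesis using d 3(1) by simp
        next
          case False
          then have d: "dir j P (Suc i, P (Suc i)) = West" by (simp add: dir_W)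
          have "c = (Suc i, P (Suc i))" using c False by simp
          moreover have "(Suc i, P (Suc i)) \<in> crossings ns" using 3 Pi by (simp add: cr_iff)
          moreover have "corner_region ns (Suc i, P (Suc i)) West = W i" using 3 by (simp add: corner_region_def)
          ultimately show ?thesis using d 3(1) by simp
        qed
      qed
      then show ?thesis by blast
    qed
  qed
  show ?thesis unfolding perfect_matching_def
  proof (intro conjI ballI)
    show "match j P \<subseteq> gamma_edges ns" using ge by (auto simp: match_def gamma_edges_def)
  next
    fix c assume "c \<in> crossings ns"
    then have "{d. (c, d) \<in> match j P} = {dir j P c}" by (auto simp: match_def)
    then show "card {d. (c, d) \<in> match j P} = 1" by simp
  next
    fix R assume "R \<in> gamma_regions ns"
    then obtain c0 where "{c \<in> crossings ns. corner_region ns c (dir j P c) = R} = {c0}"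
      using reg by blast
    then show "card {\<epsilon> \<in> match j P. corner_region ns (fst \<epsilon>) (snd \<epsilon>) = R} = 1"
      unfolding match_def card_graph_filter[of "dir j P" _ "\<lambda>c d. corner_region ns c d = R"] by simp
  qed
qed

lemma match_inj:
  assumes v: "valid j P" and v': "valid j' P'" and eq: "match j P = match j' P'"
  shows "j = j' \<and> P = P'"
proof -
  note vd = validD[OF v] and vd' = validD[OF v']
  have de: "dir j P c = dir j' P' c" if "c \<in> crossings ns" for c
  proof -
    have "(c, dir j P c) \<in> match j' P'" using eq that by (auto simp: match_def)
    then show ?thesis by (auto simp: match_def)
  qed
  have jj: "j = j'"
  proof (rule ccontr)
    assume ne: "j \<noteq> j'"
    have "(j, m j) \<in> crossings ns" using vd m_pos by (auto simp: cr_iff)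
    from de[OF this] show False using vd vd'(3)[of j] ne by (auto simp: dir_def split: if_splits)
  qed
  have "P i = P' i" for i
  proof (cases "1 \<le> i \<and> i \<le> k")
    case True
    show ?thesis
    proof (cases "i = j")
      case True then show ?thesis using vd vd' jj by simp
    next
      case False
      have "(i, P i) \<in> crossings ns" using vd \<open>1 \<le> i \<and> i \<le> k\<close> by (auto simp: cr_iff)
      from de[OF this] show ?thesis using jj False by (auto simp: dir_def split: if_splits)
    qed
  next
    case False then show ?thesis using v v' by (simp add: valid_def)
  qed
  then show ?thesis using jj by auto
qed

end



context pz begin

lemma match_surj:
  assumes M: "perfect_matching ns M"
  shows "\<exists>j P. valid j P \<and> M = match j P"
proof -
  have Msub: "M \<subseteq> gamma_edges ns"
    and oned: "\<And>c. c \<in> crossings ns \<Longrightarrow> card {d. (c, d) \<in> M} = 1"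
    and oneR: "\<And>R. R \<in> gamma_regions ns \<Longrightarrow> card {\<epsilon>\<in>M. corner_region ns (fst \<epsilon>) (snd \<epsilon>) = R} = 1"
    using M by (auto simp: perfect_matching_def)
  define d where "d c = (THE x. (c, x) \<in> M)" for c
  have dM: "(c, d c) \<in> M" if c0: "c \<in> crossings ns" for c
  proof -
    obtain x where "{x'. (c, x') \<in> M} = {x}" using oned[OF c0] card_1_singletonE by blast
    then show ?thesis unfolding d_def by (metis (mono_tags, lifting) mem_Collect_eq singletonD singletonI theI)
  qed
  have dU: "x = d c" if "(c, x) \<in> M" for c x
  proof -
    have c: "c \<in> crossings ns" using that Msub by (auto simp: gamma_edges_def)
    obtain y where "{x'. (c, x') \<in> M} = {y}" using oned[OF c] card_1_singletonE by blast
    then show ?thesis using dM[OF c] that by (metis mem_Collect_eq singletonD)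
  qed
  have Meq: "M = (\<lambda>c. (c, d c)) ` crossings ns"
  proof
    show "M \<subseteq> (\<lambda>c. (c, d c)) ` crossings ns"
    proof
      fix e assume e: "e \<in> M"
      obtain c x where cx: "e = (c, x)" by fastforce
      have c: "c \<in> crossings ns" using e cx Msub by (auto simp: gamma_edges_def)
      have "x = d c" using dU e cx by blast
      then show "e \<in> (\<lambda>c. (c, d c)) ` crossings ns" using cx c by (simp add: image_iff)
    qed
  qed (use dM in auto)
  have dne: "corner_region ns c (d c) \<noteq> U \<and> corner_region ns c (d c) \<noteq> Rtop" if "c \<in> crossings ns" for c
    using dM[OF that] Msub by (auto simp: gamma_edges_def)
  have cover: "\<exists>c\<in>crossings ns. corner_region ns c (d c) = R" if R0: "R \<in> gamma_regions ns" for R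
  proof -
    obtain e where "{\<epsilon>\<in>M. corner_region ns (fst \<epsilon>) (snd \<epsilon>) = R} = {e}"
      using oneR[OF R0] card_1_singletonE by blast
    then have "e \<in> M" "corner_region ns (fst e) (snd e) = R" by auto
    then show ?thesis using Meq by auto
  qed
  have uniq: "c = c'" if u: "R \<in> gamma_regions ns" "c \<in> crossings ns" "c' \<in> crossings ns"
    "corner_region ns c (d c) = R" "corner_region ns c' (d c') = R" for R c c'
  proof -
    obtain e where "{\<epsilon>\<in>M. corner_region ns (fst \<epsilon>) (snd \<epsilon>) = R} = {e}"
      using oneR[OF u(1)] card_1_singletonE by blast
    note eq = this
    have "(c, d c) \<in> {\<epsilon>\<in>M. corner_region ns (fst \<epsilon>) (snd \<epsilon>) = R}" using dM[OF u(2)] u(4) by simp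
    moreover have "(c', d c') \<in> {\<epsilon>\<in>M. corner_region ns (fst \<epsilon>) (snd \<epsilon>) = R}" using dM[OF u(3)] u(5) by simp
    ultimately show ?thesis unfolding eq by (metis prod.inject singletonD)
  qed
  have F1: "d (i, 1) \<noteq> North" if "1 \<le> i" "i \<le> k" for i
    using dne[of "(i, 1)"] that m_pos[of i] by (auto simp: cr_iff corner_region_def)
  have F2: "d (i, p) = South \<longleftrightarrow> d (i, Suc p) \<noteq> North" if "1 \<le> i" "i \<le> k" "1 \<le> p" "p < m i" for i p
  proof -
    have R: "Inside i p \<in> gamma_regions ns" using that gamma_regions_cases by blast
    have c1: "(i, p) \<in> crossings ns" "(i, Suc p) \<in> crossings ns" using that by (auto simp: cr_iff)
    have a: "corner_region ns (i, p) South = Inside i p" "corner_region ns (i, Suc p) North = Inside i p"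
      using that by (auto simp: corner_region_def)
    show ?thesis
    proof
      assume "d (i, p) = South"
      then show "d (i, Suc p) \<noteq> North" using uniq[OF R c1(1) c1(2)] a by auto
    next
      assume nN: "d (i, Suc p) \<noteq> North"
      obtain c where c: "c \<in> crossings ns" "corner_region ns c (d c) = Inside i p" using cover[OF R] by blast
      obtain i' p' where ip: "c = (i', p')" by fastforce
      show "d (i, p) = South" using corner_Inside[of i' p' "d c" i p] c ip nN by auto
    qed
  qed
  define P where "P i = (LEAST p. 1 \<le> p \<and> (d (i, p) \<noteq> South \<or> p = m i))" for i
  have Pprops: "1 \<le> P i \<and> P i \<le> m i \<and> (\<forall>p. 1 \<le> p \<and> p < P i \<longrightarrow> d (i, p) = South)
      \<and> (P i < m i \<longrightarrow> d (i, P i) \<noteq> South)" if "1 \<le> i" "i \<le> k" for i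
  proof -
    have ex: "1 \<le> m i \<and> (d (i, m i) \<noteq> South \<or> m i = m i)" using m_pos that by simp
    have a: "1 \<le> P i \<and> (d (i, P i) \<noteq> South \<or> P i = m i)"
      unfolding P_def by (rule LeastI[of _ "m i"]) (rule ex)
    have b: "P i \<le> m i" unfolding P_def by (rule Least_le) (rule ex)
    have c: "d (i, p) = South" if "1 \<le> p" "p < P i" for p
      using not_less_Least[of p "\<lambda>p. 1 \<le> p \<and> (d (i, p) \<noteq> South \<or> p = m i)"] that b
      unfolding P_def[symmetric] by auto
    show ?thesis using a b c by auto
  qed
  have PN: "d (i, P i) \<noteq> North" if "1 \<le> i" "i \<le> k" for i
  proof (cases "P i = 1")
    case True then show ?thesis using F1 that by simp
  next
    case False
    then have "d (i, P i - 1) = South" using Pprops[OF that] by auto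
    moreover have "Suc (P i - 1) = P i" using Pprops[OF that] by auto
    moreover have h: "1 \<le> P i - 1" "P i - 1 < m i" using Pprops[OF that] False by auto
    ultimately show ?thesis using F2[OF that h] by simp
  qed
  have Pabove: "d (i, P i + Suc t) = North" if "1 \<le> i" "i \<le> k" "P i + Suc t \<le> m i" for i t
    using that(3)
  proof (induction t)
    case 0
    then have "d (i, P i) \<noteq> South" using Pprops[OF that(1,2)] by auto
    then show ?case using F2[OF that(1,2), of "P i"] Pprops[OF that(1,2)] 0 by auto
  next
    case (Suc t)
    then have "d (i, P i + Suc t) = North" by auto
    then show ?case using F2[OF that(1,2), of "P i + Suc t"] Pprops[OF that(1,2)] Suc by auto
  qed
  have dform: "d (i, p) = (if p < P i then South else if P i < p then North else d (i, P i))"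
    if "1 \<le> i" "i \<le> k" "1 \<le> p" "p \<le> m i" for i p
  proof -
    have "P i < p \<Longrightarrow> d (i, p) = North"
      using Pabove[OF that(1,2), of "p - P i - 1"] that by auto
    then show ?thesis using Pprops[OF that(1,2)] that by auto
  qed
  define X where "X i = d (i, P i)" for i
  have Xc: "1 \<le> i \<Longrightarrow> i \<le> k \<Longrightarrow> (i, P i) \<in> crossings ns" for i using Pprops by (auto simp: cr_iff)
  have XS: "X i = South \<longleftrightarrow> corner_region ns (i, m i) (d (i, m i)) = Rbot" if "1 \<le> i" "i \<le> k" for i
  proof -
    have c: "(i, m i) \<in> crossings ns" using that m_pos by (auto simp: cr_iff)
    show ?thesis
      using corner_Rbot[OF c] dform[OF that, of "m i"] Pprops[OF that] m_pos[OF that]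
      by (auto simp: X_def)
  qed
  have XSm: "X i = South \<Longrightarrow> P i = m i" if "1 \<le> i" "i \<le> k" for i
    using Pprops[OF that] by (auto simp: X_def)
  have Rb: "Rbot \<in> gamma_regions ns" by (simp add: gamma_regions_cases)
  obtain j where j: "1 \<le> j" "j \<le> k" "X j = South"
  proof -
    obtain c where c: "c \<in> crossings ns" "corner_region ns c (d c) = Rbot" using cover[OF Rb] by blast
    obtain i p where ip: "c = (i, p)" by fastforce
    have "p = m i" "1 \<le> i" "i \<le> k" using corner_Rbot c ip by (auto simp: cr_iff)
    then show ?thesis using that XS c ip by auto
  qed
  have jU: "i = j" if "1 \<le> i" "i \<le> k" "X i = South" for i
  proof -
    have "(i, m i) = (j, m j)"
      by (rule uniq[OF Rb]) (use that j XS m_pos in \<open>auto simp: cr_iff\<close>)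
    then show ?thesis by simp
  qed
  have dE: "d (i, p) = East \<longleftrightarrow> p = P i \<and> X i = East" if "1 \<le> i" "i \<le> k" "1 \<le> p" "p \<le> m i" for i p
    using dform[OF that] by (auto simp: X_def)
  have dWe: "d (i, p) = West \<longleftrightarrow> p = P i \<and> X i = West" if "1 \<le> i" "i \<le> k" "1 \<le> p" "p \<le> m i" for i p
    using dform[OF that] by (auto simp: X_def)
  have WW: "X i = East \<longleftrightarrow> X (Suc i) \<noteq> West" if "1 \<le> i" "i < k" for i
  proof -
    have R: "W i \<in> gamma_regions ns" using that gamma_regions_cases by blast
    have c1: "(i, P i) \<in> crossings ns" "(Suc i, P (Suc i)) \<in> crossings ns" using that Xc by auto
    show ?thesis
    proof
      assume E: "X i = East"
      show "X (Suc i) \<noteq> West"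
      proof
        assume "X (Suc i) = West"
        then have "(i, P i) = (Suc i, P (Suc i))"
          using uniq[OF R c1] E corner_W[OF c1(1) that(1)] corner_W[OF c1(2) that(1)] that by (auto simp: X_def)
        then show False by simp
      qed
    next
      assume nW: "X (Suc i) \<noteq> West"
      obtain c where c: "c \<in> crossings ns" "corner_region ns c (d c) = W i" using cover[OF R] by blast
      obtain i' p' where ip: "c = (i', p')" by fastforce
      have cr: "1 \<le> i'" "i' \<le> k" "1 \<le> p'" "p' \<le> m i'" using c ip by (auto simp: cr_iff)
      show "X i = East"
        using corner_W[of i' p' i "d c"] c ip that dE[OF cr] dWe[OF cr] nW by auto
    qed
  qed
  have Xgt: "X (j + Suc t) = West" if "j + Suc t \<le> k" for t
    using that
  proof (induction t)
    case 0
    have "X j \<noteq> East" using j by simp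
    then show ?case using WW[of j] j 0 by auto
  next
    case (Suc t)
    then have "X (j + Suc t) = West" by auto
    then show ?case using WW[of "j + Suc t"] j Suc by auto
  qed
  have Xlt: "X (j - Suc t) = East" if "Suc t < j" for t
    using that
  proof (induction t)
    case 0
    have "X j \<noteq> West" using j by simp
    then show ?case using WW[of "j - 1"] j 0 by auto
  next
    case (Suc t)
    then have a: "X (j - Suc t) = East" by auto
    have "Suc (j - Suc (Suc t)) = j - Suc t" using Suc by auto
    then show ?case using WW[of "j - Suc (Suc t)"] j Suc a by auto
  qed
  define P' where "P' i = (if 1 \<le> i \<and> i \<le> k then P i else 0)" for i
  have v: "valid j P'" using j Pprops XSm by (auto simp: valid_def P'_def)
  have "d c = dir j P' c" if "c \<in> crossings ns" for c
  proof -
    obtain i p where ip: "c = (i, p)" by fastforce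
    have cr: "1 \<le> i" "i \<le> k" "1 \<le> p" "p \<le> m i" using that ip by (auto simp: cr_iff)
    have xi: "X i = (if i = j then South else if i < j then East else West)"
    proof -
      have "i < j \<Longrightarrow> X i = East" using Xlt[of "j - i - 1"] cr by auto
      moreover have "j < i \<Longrightarrow> X i = West" using Xgt[of "i - j - 1"] cr by auto
      ultimately show ?thesis using j by auto
    qed
    show ?thesis using dform[OF cr] xi cr ip by (auto simp: dir_def P'_def X_def)
  qed
  then have "M = match j P'" unfolding Meq match_def by (auto intro: image_cong)
  then show ?thesis using v by blast
qed

end



context pz begin

definition off :: "nat \<Rightarrow> nat" where "off i = (\<Sum>j\<in>{1..<i}. m j)"

lemma cnum_eq: "cnum ns (i, p) = (if i = 1 then p else off i + (m i + 1 - p))"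
  by (simp add: cnum_def off_def)

lemma off_Suc: "1 \<le> i \<Longrightarrow> off (Suc i) = off i + m i"
  by (simp add: off_def)

lemma off_mono: "i \<le> i' \<Longrightarrow> off i \<le> off i'"
  unfolding off_def by (rule sum_mono2) auto

lemma off_1: "off (Suc 0) = 0" by (simp add: off_def)

lemma cnum_range:
  assumes "(i, p) \<in> crossings ns"
  shows "off i < cnum ns (i, p) \<and> cnum ns (i, p) \<le> off i + m i"
  using assms by (auto simp: cnum_eq cr_iff off_1)

lemma cnum_lt_col:
  assumes "(i, p) \<in> crossings ns" "(i', p') \<in> crossings ns" "i < i'"
  shows "cnum ns (i, p) < cnum ns (i', p')"
proof -
  have "1 \<le> i" using assms by (simp add: cr_iff)
  then have "off i + m i \<le> off i'" using off_Suc off_mono[of "Suc i" i'] assms(3) by simp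
  then show ?thesis using cnum_range[OF assms(1)] cnum_range[OF assms(2)] by linarith
qed

lemma cnum_le_iff:
  assumes "(i, p) \<in> crossings ns" "(i', p') \<in> crossings ns"
  shows "cnum ns (i, p) \<le> cnum ns (i', p') \<longleftrightarrow>
    i < i' \<or> (i = i' \<and> (if i = 1 then p \<le> p' else p' \<le> p))"
proof (cases "i = i'")
  case True
  then show ?thesis using assms by (auto simp: cnum_eq cr_iff)
next
  case False
  then show ?thesis using cnum_lt_col[OF assms] cnum_lt_col[OF assms(2,1)]
    by (metis le_less_trans less_imp_le_nat linorder_neqE_nat not_le)
qed

lemma inc_Inside:
  assumes "1 \<le> i" "i \<le> k" "1 \<le> q" "q < m i"
  shows "{c' \<in> crossings ns. \<exists>d'. corner_region ns c' d' = Inside i q} = {(i, q), (i, Suc q)}"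
proof (intro equalityI subsetI)
  fix c assume c: "c \<in> {c' \<in> crossings ns. \<exists>d'. corner_region ns c' d' = Inside i q}"
  obtain i' p where ip: "c = (i', p)" by fastforce
  then show "c \<in> {(i, q), (i, Suc q)}" using corner_Inside[of i' p] c by auto
next
  fix c assume "c \<in> {(i, q), (i, Suc q)}"
  moreover have "corner_region ns (i, q) South = Inside i q" "corner_region ns (i, Suc q) North = Inside i q"
    using assms by (auto simp: corner_region_def)
  ultimately show "c \<in> {c' \<in> crossings ns. \<exists>d'. corner_region ns c' d' = Inside i q}"
    using assms by (auto simp: cr_iff)
qed

lemma inc_Rbot:
  "{c' \<in> crossings ns. \<exists>d'. corner_region ns c' d' = Rbot} = {(i', m i') | i'. 1 \<le> i' \<and> i' \<le> k}"
proof (intro equalityI subsetI)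
  fix c assume c: "c \<in> {c' \<in> crossings ns. \<exists>d'. corner_region ns c' d' = Rbot}"
  obtain i' p where ip: "c = (i', p)" by fastforce
  then show "c \<in> {(i', m i') | i'. 1 \<le> i' \<and> i' \<le> k}" using corner_Rbot[of i' p] c by (auto simp: cr_iff)
next
  fix c assume "c \<in> {(i', m i') | i'. 1 \<le> i' \<and> i' \<le> k}"
  then obtain i' where i': "c = (i', m i')" "1 \<le> i'" "i' \<le> k" by blast
  then have "(i', m i') \<in> crossings ns" using m_pos by (auto simp: cr_iff)
  then show "c \<in> {c' \<in> crossings ns. \<exists>d'. corner_region ns c' d' = Rbot}"
    using corner_Rbot i' by auto
qed

lemma inc_W:
  assumes "1 \<le> i" "i < k"
  shows "{c' \<in> crossings ns. \<exists>d'. corner_region ns c' d' = W i} = {c' \<in> crossings ns. fst c' = i \<or> fst c' = Suc i}"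
proof (intro equalityI subsetI)
  fix c assume c: "c \<in> {c' \<in> crossings ns. \<exists>d'. corner_region ns c' d' = W i}"
  obtain i' p where ip: "c = (i', p)" by fastforce
  then show "c \<in> {c' \<in> crossings ns. fst c' = i \<or> fst c' = Suc i}" using corner_W[of i' p i] c assms by auto
next
  fix c assume c: "c \<in> {c' \<in> crossings ns. fst c' = i \<or> fst c' = Suc i}"
  obtain i' p where ip: "c = (i', p)" by fastforce
  have "corner_region ns (i', p) (if i' = i then East else West) = W i"
    using corner_W[of i' p i] c ip assms by auto
  then show "c \<in> {c' \<in> crossings ns. \<exists>d'. corner_region ns c' d' = W i}" using c ip by blast
qed

lemma gamma_live_iff:
  "gamma_live ns (c, d) \<longleftrightarrow> (\<forall>c'\<in>{c' \<in> crossings ns. \<exists>d'. corner_region ns c' d' = corner_region ns c d}.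
     cnum ns c \<le> cnum ns c')"
  by (auto simp: gamma_live_def)

lemma cutset_sub:
  assumes v: "valid j P" and c: "c \<in> tree j P" shows "cutset j P c \<subseteq> crossings ns"
proof -
  obtain i p where ip: "c = (i, p)" by fastforce
  have cr: "1 \<le> i" "i \<le> k" "1 \<le> p" "p \<le> m i" using c ip by (auto simp: tree_def cr_iff)
  have Pi: "1 \<le> P i" "P i \<le> m i" using validD(3)[OF v cr(1,2)] by auto
  show ?thesis using validD(3)[OF v] cr Pi ip by (auto simp: cutset_def cr_iff)
qed

lemma tutte_live_tree:
  assumes v: "valid j P" and c: "c \<in> crossings ns"
  shows "tutte_live (crossings ns) (tait_ends ns) (cnum ns) (tree j P) c \<longleftrightarrow>
    (if c \<in> tree j P then (\<forall>f\<in>cutset j P c. cnum ns c \<le> cnum ns f)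
     else (\<forall>f\<in>insert c {f \<in> tree j P. c \<in> cutset j P f}. cnum ns c \<le> cnum ns f))"
proof (cases "c \<in> tree j P")
  case True
  have "fund_cut (crossings ns) (tait_ends ns) (tree j P) c = cutset j P c"
    using cut[OF v True] cutset_sub[OF v True] by (auto simp: fund_cut_def)
  then show ?thesis using True by (simp add: tutte_live_def)
next
  case False
  have "fund_cycle (tait_ends ns) (tree j P) c = insert c {f \<in> tree j P. c \<in> cutset j P f}"
    using cut[OF v _ c] by (auto simp: fund_cycle_def)
  then show ?thesis using False by (simp add: tutte_live_def)
qed

end



context pz begin

lemma colj_min:
  assumes "(j, p) \<in> crossings ns" "\<And>i'. 1 \<le> i' \<Longrightarrow> i' \<le> k \<Longrightarrow> (i', Q i') \<in> crossings ns"
  shows "(\<forall>i'. 1 \<le> i' \<and> i' \<le> k \<and> i' \<noteq> j \<longrightarrow> cnum ns (j, p) \<le> cnum ns (i', Q i')) \<longleftrightarrow> j = 1"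
proof
  assume h: "\<forall>i'. 1 \<le> i' \<and> i' \<le> k \<and> i' \<noteq> j \<longrightarrow> cnum ns (j, p) \<le> cnum ns (i', Q i')"
  show "j = 1"
  proof (rule ccontr)
    assume "j \<noteq> 1"
    then have "cnum ns (j, p) \<le> cnum ns (1, Q 1)" using h k_pos by auto
    then show False using cnum_le_iff[OF assms(1) assms(2)[of 1]] k_pos \<open>j \<noteq> 1\<close> assms(1)
      by (auto simp: cr_iff)
  qed
next
  assume "j = 1"
  then show "\<forall>i'. 1 \<le> i' \<and> i' \<le> k \<and> i' \<noteq> j \<longrightarrow> cnum ns (j, p) \<le> cnum ns (i', Q i')"
    using cnum_le_iff[OF assms(1) assms(2)] by auto
qed

lemma live_eq:
  assumes v: "valid j P" and c: "c \<in> crossings ns"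
  shows "tutte_live (crossings ns) (tait_ends ns) (cnum ns) (tree j P) c \<longleftrightarrow> gamma_live ns (c, dir j P c)"
proof -
  obtain i p where ip: "c = (i, p)" by fastforce
  have c': "(i, p) \<in> crossings ns" using c ip by simp
  have cr: "1 \<le> i" "i \<le> k" "1 \<le> p" "p \<le> m i" using c' by (auto simp: cr_iff)
  note vd = validD[OF v]
  have Pi: "1 \<le> P i" "P i \<le> m i" using vd(3)[OF cr(1,2)] by auto
  have Pc: "\<And>i'. 1 \<le> i' \<Longrightarrow> i' \<le> k \<Longrightarrow> (i', P i') \<in> crossings ns" using vd(3) by (auto simp: cr_iff)
  have Mc: "\<And>i'. 1 \<le> i' \<Longrightarrow> i' \<le> k \<Longrightarrow> (i', m i') \<in> crossings ns" using m_pos by (auto simp: cr_iff)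
  have TL: "tutte_live (crossings ns) (tait_ends ns) (cnum ns) (tree j P) (i, p) \<longleftrightarrow>
    (if (i, p) \<in> tree j P then (\<forall>f\<in>cutset j P (i, p). cnum ns (i, p) \<le> cnum ns f)
     else (\<forall>f\<in>insert (i, p) {f \<in> tree j P. (i, p) \<in> cutset j P f}. cnum ns (i, p) \<le> cnum ns f))"
    using tutte_live_tree[OF v c'] .
  have "(i \<noteq> j \<and> p < P i) \<or> (i \<noteq> j \<and> P i < p) \<or> (i = j \<and> p < m j) \<or> (i = j \<and> p = m j)
    \<or> (i \<noteq> j \<and> p = P i \<and> i < j) \<or> (i \<noteq> j \<and> p = P i \<and> j < i)" using cr vd(4) by (cases "i = j") auto
  then consider (A1) "i \<noteq> j" "p < P i" | (A2) "i \<noteq> j" "P i < p" | (B1) "i = j" "p < m j"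
    | (B2) "i = j" "p = m j" | (C1) "i \<noteq> j" "p = P i" "i < j" | (C2) "i \<noteq> j" "p = P i" "j < i"
    by blast
  then show ?thesis
  proof cases
    case A1
    have inT: "(i, p) \<in> tree j P" using c' A1 by (simp add: tree_def)
    have "tutte_live (crossings ns) (tait_ends ns) (cnum ns) (tree j P) (i, p) \<longleftrightarrow>
        cnum ns (i, p) \<le> cnum ns (i, P i)"
      using TL inT A1 by (simp add: cutset_def)
    also have "\<dots> \<longleftrightarrow> i = 1" using cnum_le_iff[OF c' Pc[OF cr(1,2)]] A1 by auto
    also have "\<dots> \<longleftrightarrow> cnum ns (i, p) \<le> cnum ns (i, Suc p)"
    proof -
      have c2: "(i, Suc p) \<in> crossings ns" using cr A1 Pi by (auto simp: cr_iff)
      show ?thesis using cnum_le_iff[OF c' c2] by auto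
    qed
    also have "\<dots> \<longleftrightarrow> gamma_live ns ((i, p), dir j P (i, p))"
    proof -
      have d: "dir j P (i, p) = South" using A1 by (simp add: dir_S)
      have co: "corner_region ns (i, p) South = Inside i p" using A1 Pi by (simp add: corner_region_def)
      show ?thesis unfolding gamma_live_iff d co inc_Inside[OF cr(1,2,3), of ] using A1 Pi
        by (subst inc_Inside) (use cr in auto)
    qed
    finally show ?thesis using ip by simp
  next
    case A2
    have inT: "(i, p) \<in> tree j P" using c' A2 by (simp add: tree_def)
    have "tutte_live (crossings ns) (tait_ends ns) (cnum ns) (tree j P) (i, p) \<longleftrightarrow>
        cnum ns (i, p) \<le> cnum ns (i, P i)"
      using TL inT A2 by (simp add: cutset_def)
    also have "\<dots> \<longleftrightarrow> i \<noteq> 1" using cnum_le_iff[OF c' Pc[OF cr(1,2)]] A2 by auto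
    also have "\<dots> \<longleftrightarrow> cnum ns (i, p) \<le> cnum ns (i, p - 1)"
    proof -
      have c2: "(i, p - 1) \<in> crossings ns" using cr A2 Pi by (auto simp: cr_iff)
      show ?thesis using cnum_le_iff[OF c' c2] A2 by auto
    qed
    also have "\<dots> \<longleftrightarrow> gamma_live ns ((i, p), dir j P (i, p))"
    proof -
      have d: "dir j P (i, p) = North" using A2 by (simp add: dir_N)
      have co: "corner_region ns (i, p) North = Inside i (p - 1)" using A2 Pi by (simp add: corner_region_def)
      have inc: "{c' \<in> crossings ns. \<exists>d'. corner_region ns c' d' = Inside i (p - 1)} = {(i, p - 1), (i, p)}"
        using inc_Inside[of i "p - 1"] cr A2 Pi by auto
      show ?thesis unfolding gamma_live_iff d co inc by simp
    qed
    finally show ?thesis using ip by simp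
  next
    case B1
    have inT: "(i, p) \<in> tree j P" using c' B1 by (simp add: tree_def)
    have "tutte_live (crossings ns) (tait_ends ns) (cnum ns) (tree j P) (i, p) \<longleftrightarrow>
        (\<forall>i'. 1 \<le> i' \<and> i' \<le> k \<and> i' \<noteq> j \<longrightarrow> cnum ns (j, p) \<le> cnum ns (i', P i'))"
      using TL inT B1 by (auto simp: cutset_def)
    also have "\<dots> \<longleftrightarrow> j = 1" using colj_min[where Q=P] c' B1 Pc by simp
    also have "\<dots> \<longleftrightarrow> cnum ns (i, p) \<le> cnum ns (i, Suc p)"
    proof -
      have c2: "(i, Suc p) \<in> crossings ns" using cr B1 by (auto simp: cr_iff)
      show ?thesis using cnum_le_iff[OF c' c2] B1 by auto
    qed
    also have "\<dots> \<longleftrightarrow> gamma_live ns ((i, p), dir j P (i, p))"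
    proof -
      have d: "dir j P (i, p) = South" using B1 vd(4) by (simp add: dir_S)
      have co: "corner_region ns (i, p) South = Inside i p" using B1 by (simp add: corner_region_def)
      have inc: "{c' \<in> crossings ns. \<exists>d'. corner_region ns c' d' = Inside i p} = {(i, p), (i, Suc p)}"
        using inc_Inside[of i p] cr B1 by auto
      show ?thesis unfolding gamma_live_iff d co inc by simp
    qed
    finally show ?thesis using ip by simp
  next
    case B2
    have inT: "(i, p) \<in> tree j P" using c' B2 by (simp add: tree_def)
    have "tutte_live (crossings ns) (tait_ends ns) (cnum ns) (tree j P) (i, p) \<longleftrightarrow>
        (\<forall>i'. 1 \<le> i' \<and> i' \<le> k \<and> i' \<noteq> j \<longrightarrow> cnum ns (j, p) \<le> cnum ns (i', P i'))"
      using TL inT B2 by (auto simp: cutset_def)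
    also have "\<dots> \<longleftrightarrow> j = 1" using colj_min[where Q=P] c' B2 Pc by simp
    also have "\<dots> \<longleftrightarrow> (\<forall>i'. 1 \<le> i' \<and> i' \<le> k \<and> i' \<noteq> j \<longrightarrow> cnum ns (j, p) \<le> cnum ns (i', m i'))"
      using colj_min[where Q=m] c' B2 Mc by simp
    also have "\<dots> \<longleftrightarrow> gamma_live ns ((i, p), dir j P (i, p))"
    proof -
      have d: "dir j P (i, p) = South" using B2 vd(4) by (simp add: dir_S)
      have co: "corner_region ns (i, p) South = Rbot" using B2 by (simp add: corner_region_def)
      show ?thesis unfolding gamma_live_iff d co inc_Rbot using B2 by auto
    qed
    finally show ?thesis using ip by simp
  next
    case C1
    have nT: "(i, p) \<notin> tree j P" using C1 by (simp add: tree_def)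
    have "tutte_live (crossings ns) (tait_ends ns) (cnum ns) (tree j P) (i, p) \<longleftrightarrow>
        (\<forall>q. 1 \<le> q \<and> q \<le> m i \<longrightarrow> cnum ns (i, P i) \<le> cnum ns (i, q))"
    proof -
      have "(\<forall>f\<in>insert (i, p) {f \<in> tree j P. (i, p) \<in> cutset j P f}. cnum ns (i, p) \<le> cnum ns f)
          \<longleftrightarrow> (\<forall>q. 1 \<le> q \<and> q \<le> m i \<longrightarrow> cnum ns (i, P i) \<le> cnum ns (i, q))"
      proof
        assume h: "\<forall>f\<in>insert (i, p) {f \<in> tree j P. (i, p) \<in> cutset j P f}. cnum ns (i, p) \<le> cnum ns f"
        show "\<forall>q. 1 \<le> q \<and> q \<le> m i \<longrightarrow> cnum ns (i, P i) \<le> cnum ns (i, q)"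
        proof (intro allI impI)
          fix q assume q: "1 \<le> q \<and> q \<le> m i"
          show "cnum ns (i, P i) \<le> cnum ns (i, q)"
          proof (cases "q = P i")
            case False
            then have "(i, q) \<in> tree j P" "(i, p) \<in> cutset j P (i, q)"
              using q cr C1 by (auto simp: tree_def cutset_def cr_iff)
            then show ?thesis using h C1 by auto
          qed simp
        qed
      next
        assume h: "\<forall>q. 1 \<le> q \<and> q \<le> m i \<longrightarrow> cnum ns (i, P i) \<le> cnum ns (i, q)"
        show "\<forall>f\<in>insert (i, p) {f \<in> tree j P. (i, p) \<in> cutset j P f}. cnum ns (i, p) \<le> cnum ns f"
        proof
          fix f assume f: "f \<in> insert (i, p) {f \<in> tree j P. (i, p) \<in> cutset j P f}"
          obtain a b where ab: "f = (a, b)" by fastforce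
          show "cnum ns (i, p) \<le> cnum ns f"
          proof (cases "f = (i, p)")
            case False
            then have fT: "(a, b) \<in> tree j P" "(i, p) \<in> cutset j P (a, b)" using f ab by auto
            have fc: "(a, b) \<in> crossings ns" using fT by (simp add: tree_def)
            show ?thesis
            proof (cases "a = j")
              case True
              then show ?thesis using cnum_lt_col[OF c' fc] C1 ab by simp
            next
              case False
              then have "a = i" using fT nT by (auto simp: cutset_def)
              then show ?thesis using h fc ab C1 by (auto simp: cr_iff)
            qed
          qed simp
        qed
      qed
      then show ?thesis using TL nT by simp
    qed
    also have "\<dots> \<longleftrightarrow> gamma_live ns ((i, p), dir j P (i, p))"
    proof -
      have d: "dir j P (i, p) = East" using C1 by (simp add: dir_E)
      have ik: "i < k" using C1 vd(2) by simp
      have co: "corner_region ns (i, p) East = W i" using ik by (simp add: corner_region_def)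
      have "gamma_live ns ((i, p), dir j P (i, p)) \<longleftrightarrow>
          (\<forall>c'\<in>{c' \<in> crossings ns. fst c' = i \<or> fst c' = Suc i}. cnum ns (i, p) \<le> cnum ns c')"
        unfolding gamma_live_iff d co inc_W[OF cr(1) ik] ..
      also have "\<dots> \<longleftrightarrow> (\<forall>q. 1 \<le> q \<and> q \<le> m i \<longrightarrow> cnum ns (i, P i) \<le> cnum ns (i, q))"
      proof
        assume "\<forall>c'\<in>{c' \<in> crossings ns. fst c' = i \<or> fst c' = Suc i}. cnum ns (i, p) \<le> cnum ns c'"
        then show "\<forall>q. 1 \<le> q \<and> q \<le> m i \<longrightarrow> cnum ns (i, P i) \<le> cnum ns (i, q)"
          using cr C1 by (auto simp: cr_iff)
      next
        assume h: "\<forall>q. 1 \<le> q \<and> q \<le> m i \<longrightarrow> cnum ns (i, P i) \<le> cnum ns (i, q)"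
        show "\<forall>c'\<in>{c' \<in> crossings ns. fst c' = i \<or> fst c' = Suc i}. cnum ns (i, p) \<le> cnum ns c'"
        proof
          fix c0 assume c0: "c0 \<in> {c' \<in> crossings ns. fst c' = i \<or> fst c' = Suc i}"
          obtain a b where ab: "c0 = (a, b)" by fastforce
          have ac: "(a, b) \<in> crossings ns" using c0 ab by simp
          show "cnum ns (i, p) \<le> cnum ns c0"
          proof (cases "a = i")
            case True then show ?thesis using h ac ab C1 by (auto simp: cr_iff)
          next
            case False then have "i < a" using c0 ab by auto
            then show ?thesis using cnum_lt_col[OF c' ac] ab by simp
          qed
        qed
      qed
      finally show ?thesis by blast
    qed
    finally show ?thesis using ip by simp
  next
    case C2
    have nT: "(i, p) \<notin> tree j P" using C2 by (simp add: tree_def)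
    have j1: "(j, 1) \<in> crossings ns" using vd m_pos by (auto simp: cr_iff)
    have "\<not> tutte_live (crossings ns) (tait_ends ns) (cnum ns) (tree j P) (i, p)"
    proof -
      have "(j, 1) \<in> tree j P" "(i, p) \<in> cutset j P (j, 1)" using j1 C2 cr by (auto simp: tree_def cutset_def)
      moreover have "cnum ns (j, 1) < cnum ns (i, p)" using cnum_lt_col[OF j1 c'] C2 by simp
      ultimately show ?thesis using TL nT by force
    qed
    moreover have "\<not> gamma_live ns ((i, p), dir j P (i, p))"
    proof -
      have d: "dir j P (i, p) = West" using C2 by (simp add: dir_W)
      have i1: "1 \<le> i - 1" "i - 1 < k" using C2 vd cr by auto
      have co: "corner_region ns (i, p) West = W (i - 1)" using C2 vd by (simp add: corner_region_def)
      have c1: "(i - 1, 1) \<in> crossings ns" using i1 m_pos[of "i - 1"] by (auto simp: cr_iff)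
      have "cnum ns (i - 1, 1) < cnum ns (i, p)" using cnum_lt_col[OF c1 c'] C2 by simp
      moreover have "(i - 1, 1) \<in> {c' \<in> crossings ns. fst c' = i - 1 \<or> fst c' = Suc (i - 1)}" using c1 by simp
      ultimately show ?thesis unfolding gamma_live_iff d co inc_W[OF i1] by force
    qed
    ultimately show ?thesis using ip by simp
  qed
qed

end



lemma prod_powi: "finite A \<Longrightarrow> (x::real) \<noteq> 0 \<Longrightarrow> (\<Prod>a\<in>A. x powi f a) = x powi (\<Sum>a\<in>A. f a)"
  by (induction A rule: finite_induct) (auto simp: power_int_add)

lemma prod_pow: "finite A \<Longrightarrow> (\<Prod>a\<in>A. (x::real) ^ f a) = x ^ (\<Sum>a\<in>A. f a)"
  by (induction A rule: finite_induct) (auto simp: power_add)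

lemma card_filter_sum: "finite A \<Longrightarrow> card {x \<in> A. Q x} = (\<Sum>x\<in>A. if Q x then 1 else 0)"
  using sum.inter_filter[of A "\<lambda>x. 1::nat" Q] by simp

lemma int_card_filter_sum: "finite A \<Longrightarrow> int (card {x \<in> A. Q x}) = (\<Sum>x\<in>A. if Q x then 1 else 0)"
  using sum.inter_filter[of A "\<lambda>x. 1::int" Q] by simp

context pz begin

lemma black_NS: "black (corner_region ns c South)" "black (corner_region ns c North)"
  by (auto simp: corner_region_def black_def split: prod.splits)

lemma black_EW: "\<not> black (corner_region ns c East)" "\<not> black (corner_region ns c West)"
  by (auto simp: corner_region_def black_def split: prod.splits)

lemma black_dir:
  assumes v: "valid j P" and c: "c \<in> crossings ns"
  shows "black (corner_region ns c (dir j P c)) \<longleftrightarrow> c \<in> tree j P"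
proof -
  obtain i p where ip: "c = (i, p)" by fastforce
  have T: "c \<in> tree j P \<longleftrightarrow> \<not> (i \<noteq> j \<and> p = P i)" using c ip by (auto simp: tree_def)
  show ?thesis
  proof (cases "dir j P (i, p)")
    case North
    have "P i < p" using North by (simp add: dir_N)
    then show ?thesis using black_NS(2)[of c] T ip North by simp
  next
    case South
    have "p < P i \<or> (p = P i \<and> i = j)" using South by (simp add: dir_S)
    then show ?thesis using black_NS(1)[of c] T ip South by auto
  next
    case East
    have "p = P i \<and> i \<noteq> j" using East by (simp add: dir_E)
    then show ?thesis using black_EW(1)[of c] T ip East by simp
  next
    case West
    have "p = P i \<and> i \<noteq> j" using West by (simp add: dir_W)
    then show ?thesis using black_EW(2)[of c] T ip West by simp
  qed
qed

lemma tree_u_sum: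
  "tree_u ns S = (\<Sum>c\<in>crossings ns.
     if tutte_live (crossings ns) (tait_ends ns) (cnum ns) S c
     then (if (c \<in> S) = tait_pos ns c then 1 else -1) else 0)"
proof -
  let ?L = "tutte_live (crossings ns) (tait_ends ns) (cnum ns) S"
  let ?p = "tait_pos ns"
  have "tree_u ns S = (\<Sum>c\<in>crossings ns. if c \<in> S \<and> ?L c \<and> ?p c then 1 else 0)
     - (\<Sum>c\<in>crossings ns. if c \<notin> S \<and> ?L c \<and> ?p c then 1 else 0)
     - (\<Sum>c\<in>crossings ns. if c \<in> S \<and> ?L c \<and> \<not> ?p c then 1 else 0)
     + (\<Sum>c\<in>crossings ns. if c \<notin> S \<and> ?L c \<and> \<not> ?p c then 1 else (0::int))"
    unfolding tree_u_def u_grading_def by (simp only: int_card_filter_sum[OF finite_cr])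
  also have "\<dots> = (\<Sum>c\<in>crossings ns. (if c \<in> S \<and> ?L c \<and> ?p c then 1 else 0)
     - (if c \<notin> S \<and> ?L c \<and> ?p c then 1 else 0)
     - (if c \<in> S \<and> ?L c \<and> \<not> ?p c then 1 else 0)
     + (if c \<notin> S \<and> ?L c \<and> \<not> ?p c then 1 else (0::int)))"
    by (simp only: sum.distrib sum_subtractf)
  also have "\<dots> = (\<Sum>c\<in>crossings ns. if ?L c then (if (c \<in> S) = ?p c then 1 else -1) else 0)"
    by (rule sum.cong) auto
  finally show ?thesis .
qed

lemma tree_v_sum:
  "tree_v ns S = (\<Sum>c\<in>crossings ns. if c \<in> S \<and> tait_pos ns c then 1 else 0)"
  unfolding tree_v_def v_grading_def by (simp add: card_filter_sum[OF finite_cr])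

lemma weight:
  assumes v: "valid j P" and u: "u \<noteq> 0"
  shows "(\<Prod>\<epsilon>\<in>match j P. alpha_kh ns u v \<epsilon>) = u powi tree_u ns (tree j P) * v ^ tree_v ns (tree j P)"
proof -
  let ?T = "tree j P"
  let ?L = "\<lambda>c. tutte_live (crossings ns) (tait_ends ns) (cnum ns) ?T c"
  define eu where "eu c = (if ?L c then (if (c \<in> ?T) = tait_pos ns c then 1 else -1) else (0::int))" for c
  define ev where "ev c = (if c \<in> ?T \<and> tait_pos ns c then 1 else (0::nat))" for c
  have inj: "inj_on (\<lambda>c. (c, dir j P c)) (crossings ns)" by (auto simp: inj_on_def)
  have "(\<Prod>\<epsilon>\<in>match j P. alpha_kh ns u v \<epsilon>) = (\<Prod>c\<in>crossings ns. alpha_kh ns u v (c, dir j P c))"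
    unfolding match_def by (simp add: prod.reindex[OF inj])
  also have "\<dots> = (\<Prod>c\<in>crossings ns. u powi eu c * v ^ ev c)"
  proof (rule prod.cong)
    fix c assume c: "c \<in> crossings ns"
    have b: "black (corner_region ns c (dir j P c)) \<longleftrightarrow> c \<in> ?T" by (rule black_dir[OF v c])
    have l: "gamma_live ns (c, dir j P c) \<longleftrightarrow> ?L c" using live_eq[OF v c] by simp
    show "alpha_kh ns u v (c, dir j P c) = u powi eu c * v ^ ev c"
      unfolding alpha_kh_def eu_def ev_def using b l
      by (auto simp: Let_def power_int_minus)
  qed simp
  also have "\<dots> = u powi (\<Sum>c\<in>crossings ns. eu c) * v ^ (\<Sum>c\<in>crossings ns. ev c)"
    by (simp add: prod.distrib prod_powi[OF finite_cr u] prod_pow[OF finite_cr])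
  also have "\<dots> = u powi tree_u ns ?T * v ^ tree_v ns ?T"
    by (simp add: tree_u_sum tree_v_sum eu_def ev_def)
  finally show ?thesis .
qed

lemma bij_match: "bij_betw (\<lambda>q. match (fst q) (snd q)) {q. valid (fst q) (snd q)} {M. perfect_matching ns M}"
  unfolding bij_betw_def
proof
  show "inj_on (\<lambda>q. match (fst q) (snd q)) {q. valid (fst q) (snd q)}"
    by (auto simp: inj_on_def dest: match_inj)
  show "(\<lambda>q. match (fst q) (snd q)) ` {q. valid (fst q) (snd q)} = {M. perfect_matching ns M}"
  proof
    show "(\<lambda>q. match (fst q) (snd q)) ` {q. valid (fst q) (snd q)} \<subseteq> {M. perfect_matching ns M}"
      using match_pm by auto
    show "{M. perfect_matching ns M} \<subseteq> (\<lambda>q. match (fst q) (snd q)) ` {q. valid (fst q) (snd q)}"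
    proof
      fix M assume "M \<in> {M. perfect_matching ns M}"
      then obtain j P where "valid j P" "M = match j P" using match_surj by blast
      then show "M \<in> (\<lambda>q. match (fst q) (snd q)) ` {q. valid (fst q) (snd q)}"
        by (auto intro!: image_eqI[of _ _ "(j, P)"])
    qed
  qed
qed

lemma bij_tree: "bij_betw (\<lambda>q. tree (fst q) (snd q)) {q. valid (fst q) (snd q)} (tait_spanning_trees ns)"
  unfolding bij_betw_def
proof
  show "inj_on (\<lambda>q. tree (fst q) (snd q)) {q. valid (fst q) (snd q)}"
    by (auto simp: inj_on_def dest: tree_inj)
  show "(\<lambda>q. tree (fst q) (snd q)) ` {q. valid (fst q) (snd q)} = tait_spanning_trees ns"
  proof
    show "(\<lambda>q. tree (fst q) (snd q)) ` {q. valid (fst q) (snd q)} \<subseteq> tait_spanning_trees ns"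
      using tree_spanning by auto
    show "tait_spanning_trees ns \<subseteq> (\<lambda>q. tree (fst q) (snd q)) ` {q. valid (fst q) (snd q)}"
    proof
      fix S assume "S \<in> tait_spanning_trees ns"
      then obtain j P where "valid j P" "S = tree j P" using tree_surj by blast
      then show "S \<in> (\<lambda>q. tree (fst q) (snd q)) ` {q. valid (fst q) (snd q)}"
        by (auto intro!: image_eqI[of _ _ "(j, P)"])
    qed
  qed
qed

lemma main_eq:
  assumes u: "u \<noteq> 0"
  shows "(\<Sum>M\<in>{M. perfect_matching ns M}. \<Prod>\<epsilon>\<in>M. alpha_kh ns u v \<epsilon>)
      = (\<Sum>S\<in>tait_spanning_trees ns. u powi tree_u ns S * v ^ tree_v ns S)"
proof -
  have "(\<Sum>M\<in>{M. perfect_matching ns M}. \<Prod>\<epsilon>\<in>M. alpha_kh ns u v \<epsilon>)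
      = (\<Sum>q\<in>{q. valid (fst q) (snd q)}. \<Prod>\<epsilon>\<in>match (fst q) (snd q). alpha_kh ns u v \<epsilon>)"
    by (rule sum.reindex_bij_betw[OF bij_match, symmetric])
  also have "\<dots> = (\<Sum>q\<in>{q. valid (fst q) (snd q)}. u powi tree_u ns (tree (fst q) (snd q)) * v ^ tree_v ns (tree (fst q) (snd q)))"
    by (rule sum.cong) (auto simp: weight[OF _ u])
  also have "\<dots> = (\<Sum>S\<in>tait_spanning_trees ns. u powi tree_u ns S * v ^ tree_v ns S)"
    by (rule sum.reindex_bij_betw[OF bij_tree])
  finally show ?thesis .
qed

end

theorem corollary7p1:
  fixes ns :: "int list"
  assumes "ns \<noteq> []"
    and "\<forall>n\<in>set ns. n \<noteq> 0"
    and "pretzel_is_knot ns"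
  shows "\<exists>\<sigma>::real. (\<sigma> = 1 \<or> \<sigma> = -1) \<and>
    (\<forall>u v::real. u \<noteq> 0 \<longrightarrow> v \<noteq> 0 \<longrightarrow>
      (\<Sum>M\<in>{M. perfect_matching ns M}. \<Prod>\<epsilon>\<in>M. alpha_kh ns u v \<epsilon>)
      = \<sigma> * (\<Sum>S\<in>tait_spanning_trees ns. u powi tree_u ns S * v ^ tree_v ns S))"
proof -
  interpret pz ns using assms(1,2) by unfold_locales
  show ?thesis using main_eq by (intro exI[of _ 1]) simp
qed



end
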